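(* Let $R$ be an integral domain, $A$ a unital $R$-algebra with involution $i$, and $(\Lambda,\ge)$ a finite partially ordered set. Then $A$ has a cell datum (with respect to $i$) whose partially ordered set is $\Lambda$ if and only if $A$ has a $\Lambda$-cell net.
   Context: An involution of an $R$-algebra is an $R$-linear algebra anti-automorphism $i$ with $i^2=\mathrm{id}$. A cell datum for a unital $R$-algebra $A$ with involution $i$ consists of a finite partially ordered set $(\Lambda,\ge)$, finite sets $\mathcal T(\lambda)$ ($\lambda\in\Lambda$), and elements $c^\lambda_{s,t}\in A$ ($s,t\in\mathcal T(\lambda)$) such that: (i) they form an $R$-basis of $A$; (ii) if $\breve A^\lambda$ denotes the $R$-span of all $c^\mu_{u,v}$ with $\mu>\lambda$, then for all $\lambda$, $s\in\mathcal T(\lambda)$, $a\in A$ there are $r^s_v(a)\in R$ with $a\,c^\lambda_{s,t}\equiv\sum_v r^s_v(a)c^\lambda_{v,t}\pmod{\breve A^\lambda}$ for every $t\in\mathcal T(\lambda)$; (iii) $i(c^\lambda_{s,t})\equiv c^\lambda_{t,s}\pmod{\breve A^\lambda}$. For a left $A$-module $M$, $i(M)=\{i(m):m\in M\}$ is the right $A$-module which is a copy of $M$ as an $R$-module with $i(m)a=i(i(a)m)$. On $M\otimes_Ri(M)$ (an $A$-$A$-bimodule) the map $i$ is the $R$-linear map $x\otimes i(y)\mapsto y\otimes i(x)$. An order ideal of $\Lambda$ is a subset $\Gamma$ such that $\lambda\in\Gamma$, $\mu\ge\lambda$ imply $\mu\in\Gamma$; write $\Gamma_{\ge\lambda}=\{\mu:\mu\ge\lambda\}$,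 $\Gamma_{>\lambda}=\{\mu:\mu>\lambda\}$. A $\Lambda$-cell net is a map $\Gamma\mapsto A_\Gamma$ from order ideals of $\Lambda$ to $i$-invariant two-sided ideals of $A$ such that: (1) $A_\emptyset=0$ and $\Gamma_1\subseteq\Gamma_2\Rightarrow A_{\Gamma_1}\subseteq A_{\Gamma_2}$; (2) writing $A_{\ge\lambda}=A_{\Gamma_{\ge\lambda}}$ and $A_{>\lambda}=A_{\Gamma_{>\lambda}}$, $A$ is the span of $\{A_{\ge\mu}:\mu\in\Lambda\}$ and $A_{>\lambda}$ is the span of $\{A_{\ge\mu}:\mu>\lambda\}$ for every $\lambda$; (3) for each $\lambda\in\Lambda$ there is a left $A$-module $M^\lambda$, finitely generated and free over $R$, such that whenever $\Gamma\subseteq\Gamma'$ are order ideals with $\Gamma'\setminus\Gamma=\{\lambda\}$ there is an $A$-$A$-bimodule isomorphism $\alpha:A_{\Gamma'}/A_\Gamma\to M^\lambda\otimes_Ri(M^\lambda)$ with $i\circ\alpha=\alpha\circ i$. *)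

theory Defs
  imports Main "Jordan_Normal_Form.Matrix"
begin

definition R_algebra :: "('r::comm_ring_1 \<Rightarrow> 'a::ring_1 \<Rightarrow> 'a) \<Rightarrow> bool" where
  "R_algebra sc \<longleftrightarrow> Modules.module sc \<and>
     (\<forall>r x y. sc r (x * y) = sc r x * y \<and> sc r (x * y) = x * sc r y)"

definition involution :: "('r::comm_ring_1 \<Rightarrow> 'a::ring_1 \<Rightarrow> 'a) \<Rightarrow> ('a \<Rightarrow> 'a) \<Rightarrow> bool" where
  "involution sc i \<longleftrightarrow>
     (\<forall>x y. i (x + y) = i x + i y) \<and> (\<forall>r x. i (sc r x) = sc r (i x)) \<and>
     (\<forall>x y. i (x * y) = i y * i x) \<and> (\<forall>x. i (i x) = x)"

text \<open>Finite partially ordered set: carrier Lam, order relation Le, where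
  (l, m) \<in> Le means l \<le> m.\<close>
definition strictly_above :: "('l \<times> 'l) set \<Rightarrow> 'l \<Rightarrow> 'l \<Rightarrow> bool" where
  "strictly_above Le m l \<longleftrightarrow> (l, m) \<in> Le \<and> l \<noteq> m"

text \<open>Cell datum. The finite index sets T(l) are taken as finite sets of naturals
  (any finite set can be recoded this way).\<close>
definition cell_upper :: "('r::comm_ring_1 \<Rightarrow> 'a::ring_1 \<Rightarrow> 'a) \<Rightarrow> 'l set \<Rightarrow> ('l \<times> 'l) set
    \<Rightarrow> ('l \<Rightarrow> nat set) \<Rightarrow> ('l \<Rightarrow> nat \<Rightarrow> nat \<Rightarrow> 'a) \<Rightarrow> 'l \<Rightarrow> 'a set" where
  "cell_upper sc Lam Le T c l =
     Modules.module.span sc {c m u v | m u v. m \<in> Lam \<and> strictly_above Le m l \<and> u \<in> T m \<and> v \<in> T m}"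

definition is_cell_datum :: "('r::comm_ring_1 \<Rightarrow> 'a::ring_1 \<Rightarrow> 'a) \<Rightarrow> ('a \<Rightarrow> 'a) \<Rightarrow> 'l set
    \<Rightarrow> ('l \<times> 'l) set \<Rightarrow> ('l \<Rightarrow> nat set) \<Rightarrow> ('l \<Rightarrow> nat \<Rightarrow> nat \<Rightarrow> 'a) \<Rightarrow> bool" where
  "is_cell_datum sc i Lam Le T c \<longleftrightarrow>
     (\<forall>l\<in>Lam. finite (T l)) \<and>
     \<comment> \<open>(i) the c's form an R-basis of A (as an indexed family)\<close>
     inj_on (\<lambda>(l, s, t). c l s t) {(l, s, t). l \<in> Lam \<and> s \<in> T l \<and> t \<in> T l} \<and>
     \<not> Modules.module.dependent sc {c l s t | l s t. l \<in> Lam \<and> s \<in> T l \<and> t \<in> T l} \<and>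
     Modules.module.span sc {c l s t | l s t. l \<in> Lam \<and> s \<in> T l \<and> t \<in> T l} = UNIV \<and>
     \<comment> \<open>(ii)\<close>
     (\<forall>l\<in>Lam. \<forall>s\<in>T l. \<forall>a. \<exists>rr :: nat \<Rightarrow> 'r. \<forall>t\<in>T l.
        a * c l s t - (\<Sum>v\<in>T l. sc (rr v) (c l v t)) \<in> cell_upper sc Lam Le T c l) \<and>
     \<comment> \<open>(iii)\<close>
     (\<forall>l\<in>Lam. \<forall>s\<in>T l. \<forall>t\<in>T l. i (c l s t) - c l t s \<in> cell_upper sc Lam Le T c l)"

definition has_cell_datum :: "('r::comm_ring_1 \<Rightarrow> 'a::ring_1 \<Rightarrow> 'a) \<Rightarrow> ('a \<Rightarrow> 'a) \<Rightarrow> 'l set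
    \<Rightarrow> ('l \<times> 'l) set \<Rightarrow> bool" where
  "has_cell_datum sc i Lam Le \<longleftrightarrow> (\<exists>T c. is_cell_datum sc i Lam Le T c)"

definition order_ideal :: "'l set \<Rightarrow> ('l \<times> 'l) set \<Rightarrow> 'l set \<Rightarrow> bool" where
  "order_ideal Lam Le G \<longleftrightarrow> G \<subseteq> Lam \<and> (\<forall>l\<in>G. \<forall>m\<in>Lam. (l, m) \<in> Le \<longrightarrow> m \<in> G)"

definition ideal_ge :: "'l set \<Rightarrow> ('l \<times> 'l) set \<Rightarrow> 'l \<Rightarrow> 'l set" where
  "ideal_ge Lam Le l = {m \<in> Lam. (l, m) \<in> Le}"

definition ideal_gt :: "'l set \<Rightarrow> ('l \<times> 'l) set \<Rightarrow> 'l \<Rightarrow> 'l set" where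
  "ideal_gt Lam Le l = {m \<in> Lam. strictly_above Le m l}"

definition two_sided_ideal :: "'a::ring_1 set \<Rightarrow> bool" where
  "two_sided_ideal I \<longleftrightarrow> 0 \<in> I \<and> (\<forall>x\<in>I. \<forall>y\<in>I. x + y \<in> I) \<and>
     (\<forall>x\<in>I. \<forall>a. a * x \<in> I \<and> x * a \<in> I)"

text \<open>A left A-module which is free of finite rank n over R is modelled as R^n
  with A acting through an R-algebra homomorphism rho : A \<rightarrow> Mat_n(R).\<close>
definition left_module_rep :: "('r::comm_ring_1 \<Rightarrow> 'a::ring_1 \<Rightarrow> 'a) \<Rightarrow> nat \<Rightarrow> ('a \<Rightarrow> 'r mat) \<Rightarrow> bool" where
  "left_module_rep sc n rho \<longleftrightarrow>
     (\<forall>a. rho a \<in> carrier_mat n n) \<and>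
     (\<forall>a b. rho (a + b) = rho a + rho b) \<and>
     (\<forall>r a. rho (sc r a) = r \<cdot>\<^sub>m rho a) \<and>
     (\<forall>a b. rho (a * b) = rho a * rho b) \<and>
     rho 1 = 1\<^sub>m n"

text \<open>For M = R^n, M \<otimes>_R i(M) is identified with n x n matrices via
  x \<otimes> i(y) \<mapsto> x y^T; then the left action is a \<cdot> X = rho(a) X, the right action is
  X \<cdot> a = X rho(i a)^T, and the map i is transposition. An A-A-bimodule isomorphism
  A_G'/A_G \<rightarrow> M \<otimes> i(M) is the same as an R-linear map alpha on A_G' onto the
  matrices, with kernel exactly A_G, intertwining the actions.\<close>
definition cell_iso :: "('r::comm_ring_1 \<Rightarrow> 'a::ring_1 \<Rightarrow> 'a) \<Rightarrow> ('a \<Rightarrow> 'a) \<Rightarrow> nat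
    \<Rightarrow> ('a \<Rightarrow> 'r mat) \<Rightarrow> 'a set \<Rightarrow> 'a set \<Rightarrow> ('a \<Rightarrow> 'r mat) \<Rightarrow> bool" where
  "cell_iso sc i n rho I I' alpha \<longleftrightarrow>
     alpha ` I' = carrier_mat n n \<and>
     (\<forall>x\<in>I'. \<forall>y\<in>I'. alpha (x + y) = alpha x + alpha y) \<and>
     (\<forall>r. \<forall>x\<in>I'. alpha (sc r x) = r \<cdot>\<^sub>m alpha x) \<and>
     (\<forall>x\<in>I'. alpha x = 0\<^sub>m n n \<longleftrightarrow> x \<in> I) \<and>
     (\<forall>a. \<forall>x\<in>I'. alpha (a * x) = rho a * alpha x) \<and>
     (\<forall>a. \<forall>x\<in>I'. alpha (x * a) = alpha x * transpose_mat (rho (i a))) \<and>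
     (\<forall>x\<in>I'. alpha (i x) = transpose_mat (alpha x))"

definition is_cell_net :: "('r::comm_ring_1 \<Rightarrow> 'a::ring_1 \<Rightarrow> 'a) \<Rightarrow> ('a \<Rightarrow> 'a) \<Rightarrow> 'l set
    \<Rightarrow> ('l \<times> 'l) set \<Rightarrow> ('l set \<Rightarrow> 'a set) \<Rightarrow> bool" where
  "is_cell_net sc i Lam Le N \<longleftrightarrow>
     (\<forall>G. order_ideal Lam Le G \<longrightarrow> two_sided_ideal (N G) \<and> i ` N G \<subseteq> N G) \<and>
     \<comment> \<open>(1)\<close>
     N {} = {0} \<and>
     (\<forall>G1 G2. order_ideal Lam Le G1 \<longrightarrow> order_ideal Lam Le G2 \<longrightarrow> G1 \<subseteq> G2 \<longrightarrow> N G1 \<subseteq> N G2) \<and>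
     \<comment> \<open>(2)\<close>
     Modules.module.span sc (\<Union>m\<in>Lam. N (ideal_ge Lam Le m)) = UNIV \<and>
     (\<forall>l\<in>Lam. N (ideal_gt Lam Le l) =
        Modules.module.span sc (\<Union>m\<in>ideal_gt Lam Le l. N (ideal_ge Lam Le m))) \<and>
     \<comment> \<open>(3)\<close>
     (\<forall>l\<in>Lam. \<exists>n rho. left_module_rep sc n rho \<and>
        (\<forall>G G'. order_ideal Lam Le G \<longrightarrow> order_ideal Lam Le G' \<longrightarrow> G \<subseteq> G' \<longrightarrow> G' - G = {l} \<longrightarrow>
           (\<exists>alpha. cell_iso sc i n rho (N G) (N G') alpha)))"

definition has_cell_net :: "('r::comm_ring_1 \<Rightarrow> 'a::ring_1 \<Rightarrow> 'a) \<Rightarrow> ('a \<Rightarrow> 'a) \<Rightarrow> 'l set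
    \<Rightarrow> ('l \<times> 'l) set \<Rightarrow> bool" where
  "has_cell_net sc i Lam Le \<longleftrightarrow> (\<exists>N. is_cell_net sc i Lam Le N)"

end

theory Submission
  imports Defs "Jordan_Normal_Form.Determinant"
begin


lemma mat_mult_left_right_inverse_comm:
  fixes A B :: "'a::comm_ring_1 mat"
  assumes A: "A \<in> carrier_mat n n" and B: "B \<in> carrier_mat n n" and AB: "A * B = 1\<^sub>m n"
  shows "B * A = 1\<^sub>m n"
proof -
  have d: "det A * det B = 1" using det_mult[OF A B] AB by simp
  define B' where "B' = det A \<cdot>\<^sub>m adj_mat B"
  have B'c: "B' \<in> carrier_mat n n" using adj_mat(1)[OF B] by (simp add: B'_def)
  have "B * B' = det A \<cdot>\<^sub>m (B * adj_mat B)"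
    unfolding B'_def using B adj_mat(1)[OF B] by (simp add: mult_smult_distrib)
  also have "\<dots> = det A \<cdot>\<^sub>m (det B \<cdot>\<^sub>m 1\<^sub>m n)" using adj_mat(2)[OF B] by simp
  also have "\<dots> = 1\<^sub>m n" by (rule eq_matI) (auto simp: d mult.assoc[symmetric])
  finally have BB': "B * B' = 1\<^sub>m n" .
  have "A = A * (B * B')" using A by (simp add: BB')
  also have "\<dots> = (A * B) * B'" using A B B'c by (simp add: assoc_mult_mat)
  also have "\<dots> = B'" using B'c by (simp add: AB)
  finally show ?thesis using BB' by simp
qed

context Modules.module
begin

notation scale (infixr \<open>\<star>\<close> 75)


definition ifam :: "('i \<Rightarrow> 'b) \<Rightarrow> 'i set \<Rightarrow> bool" where
  "ifam f I \<longleftrightarrow> (\<forall>g. (\<Sum>j\<in>I. g j \<star> f j) = 0 \<longrightarrow> (\<forall>j\<in>I. g j = 0))"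

lemma indep_famD: "local.ifam f I \<Longrightarrow> (\<Sum>j\<in>I. g j \<star> f j) = 0 \<Longrightarrow> j \<in> I \<Longrightarrow> g j = 0"
  unfolding ifam_def by blast

lemma indep_fam_eq:
  assumes "local.ifam f I" "(\<Sum>j\<in>I. g j \<star> f j) = (\<Sum>j\<in>I. h j \<star> f j)" "j \<in> I"
  shows "g j = h j"
proof -
  have "(\<Sum>j\<in>I. (g j - h j) \<star> f j) = 0"
    using assms(2) by (simp add: scale_left_diff_distrib sum_subtractf)
  from indep_famD[OF assms(1) this assms(3)] show ?thesis by simp
qed

lemma fam_span:
  assumes "finite I"
  shows "span (f ` I) = range (\<lambda>g. \<Sum>j\<in>I. g j \<star> f j)"
proof
  show "range (\<lambda>g. \<Sum>j\<in>I. g j \<star> f j) \<subseteq> span (f ` I)"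
    by (auto intro!: span_sum span_scale intro: span_base)
next
  show "span (f ` I) \<subseteq> range (\<lambda>g. \<Sum>j\<in>I. g j \<star> f j)"
  proof
    fix x assume "x \<in> span (f ` I)"
    then show "x \<in> range (\<lambda>g. \<Sum>j\<in>I. g j \<star> f j)"
    proof (induct rule: span_induct_alt)
      case base
      show ?case by (intro range_eqI[where x="\<lambda>_. 0"]) simp
    next
      case (step c x y)
      then obtain j0 where j0: "j0 \<in> I" "x = f j0" by auto
      from step obtain g where g: "y = (\<Sum>j\<in>I. g j \<star> f j)" by auto
      have "c \<star> x + y = (\<Sum>j\<in>I. (g j + (if j = j0 then c else 0)) \<star> f j)"
        using j0 assms by (simp add: g scale_left_distrib sum.distrib if_distrib[of "\<lambda>r. r \<star> f _"] add.commute cong: if_cong)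
      then show ?case by (intro range_eqI[where x="\<lambda>j. g j + (if j = j0 then c else 0)"])
    qed
  qed
qed

lemma indep_fam_imp:
  assumes "finite I" "local.ifam f I"
  shows "inj_on f I" "independent (f ` I)"
proof -
  show inj: "inj_on f I"
  proof (rule inj_onI, rule ccontr)
    fix j k assume jk: "j \<in> I" "k \<in> I" "f j = f k" "j \<noteq> k"
    define g where "g x = (if x = j then 1 else if x = k then -1 else (0::'a))" for x
    have "\<And>x. g x \<star> f x = (if x = j then f j else 0) - (if x = k then f k else 0)"
      using jk by (auto simp: g_def)
    then have "(\<Sum>x\<in>I. g x \<star> f x) = 0"
      using jk assms(1) by (simp add: sum_subtractf)
    from indep_famD[OF assms(2) this jk(1)] show False by (simp add: g_def)
  qed
  show "independent (f ` I)"
    unfolding independent_explicit_module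
  proof (intro allI impI)
    fix t u v assume t: "finite t" "t \<subseteq> f ` I" "(\<Sum>v\<in>t. u v \<star> v) = 0" "v \<in> t"
    define g where "g j = (if f j \<in> t then u (f j) else 0)" for j
    have "(\<Sum>j\<in>I. g j \<star> f j) = (\<Sum>j\<in>I \<inter> f -` t. u (f j) \<star> f j)"
      using assms(1) by (simp add: g_def if_distrib[of "\<lambda>r. r \<star> f _"] sum.If_cases Int_def cong: if_cong)
    also have "\<dots> = (\<Sum>v\<in>f ` (I \<inter> f -` t). u v \<star> v)"
      by (subst sum.reindex) (auto intro: inj_on_subset[OF inj])
    also have "f ` (I \<inter> f -` t) = t" using t(2) by auto
    finally have "(\<Sum>j\<in>I. g j \<star> f j) = 0" using t(3) by simp
    moreover obtain j where "j \<in> I" "v = f j" using t by auto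
    ultimately show "u v = 0" using indep_famD[OF assms(2)] t(4) by (force simp: g_def)
  qed
qed

lemma indep_fam_intro:
  assumes "finite I" "inj_on f I" "independent (f ` I)"
  shows "local.ifam f I"
  unfolding ifam_def
proof (intro allI impI ballI)
  fix g j assume s: "(\<Sum>j\<in>I. g j \<star> f j) = 0" and j: "j \<in> I"
  define u where "u v = g (the_inv_into I f v)" for v
  have "(\<Sum>v\<in>f ` I. u v \<star> v) = (\<Sum>j\<in>I. u (f j) \<star> f j)"
    by (simp add: sum.reindex[OF assms(2)])
  also have "\<dots> = (\<Sum>j\<in>I. g j \<star> f j)"
    by (rule sum.cong) (auto simp: u_def the_inv_into_f_f[OF assms(2)])
  finally have "(\<Sum>v\<in>f ` I. u v \<star> v) = 0" using s by simp
  from independentD[OF assms(3) finite_imageI[OF assms(1)] order_refl this] j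
  have "u (f j) = 0" by auto
  then show "g j = 0" by (simp add: u_def the_inv_into_f_f[OF assms(2) j])
qed

lemma indep_fam_bij:
  assumes "bij_betw e S I" "local.ifam f I"
  shows "local.ifam (\<lambda>p. f (e p)) S"
  unfolding ifam_def
proof (intro allI impI ballI)
  fix g p assume s: "(\<Sum>p\<in>S. g p \<star> f (e p)) = 0" and p: "p \<in> S"
  define G where "G j = g (the_inv_into S e j)" for j
  have inj: "inj_on e S" using assms(1) by (simp add: bij_betw_def)
  have "(\<Sum>j\<in>I. G j \<star> f j) = (\<Sum>p\<in>S. G (e p) \<star> f (e p))"
    using sum.reindex_bij_betw[OF assms(1), of "\<lambda>j. G j \<star> f j"] by simp
  also have "\<dots> = (\<Sum>p\<in>S. g p \<star> f (e p))"
    by (rule sum.cong) (auto simp: G_def the_inv_into_f_f[OF inj])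
  finally have "(\<Sum>j\<in>I. G j \<star> f j) = 0" using s by simp
  from indep_famD[OF assms(2) this] p assms(1) have "G (e p) = 0" by (auto simp: bij_betw_def)
  then show "g p = 0" by (simp add: G_def the_inv_into_f_f[OF inj p])
qed


lemma ifam_cong: "(\<And>j. j \<in> I \<Longrightarrow> f j = f' j) \<Longrightarrow> local.ifam f I = local.ifam f' I"
  unfolding ifam_def by (simp cong: sum.cong)

lemma span_count_aux:
  fixes B C :: "nat \<Rightarrow> 'b"
  assumes b: "local.ifam B {0..<N}" and sb: "span (B ` {0..<N}) = UNIV" and sc: "span (C ` {0..<N}) = UNIV"
  shows "local.ifam C {0..<N}"
proof -
  let ?S = "{0..<N}"
  have "\<forall>p. \<exists>g. C p = (\<Sum>q\<in>?S. g q \<star> B q)"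
    using sb fam_span[of ?S B] by auto
  then obtain Qf where Qf: "\<forall>p. C p = (\<Sum>q\<in>?S. Qf p q \<star> B q)" by metis
  have "\<forall>p. \<exists>g. B p = (\<Sum>q\<in>?S. g q \<star> C q)"
    using sc fam_span[of ?S C] by auto
  then obtain Pf where Pf: "\<forall>p. B p = (\<Sum>q\<in>?S. Pf p q \<star> C q)" by metis
  have key1: "B p = (\<Sum>r\<in>?S. (\<Sum>q\<in>?S. Pf p q * Qf q r) \<star> B r)" for p
  proof -
    have "B p = (\<Sum>q\<in>?S. Pf p q \<star> C q)" using Pf by blast
    also have "\<dots> = (\<Sum>q\<in>?S. Pf p q \<star> (\<Sum>r\<in>?S. Qf q r \<star> B r))"
      by (rule sum.cong[OF refl]) (metis Qf)
    also have "\<dots> = (\<Sum>q\<in>?S. \<Sum>r\<in>?S. (Pf p q * Qf q r) \<star> B r)"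
      by (simp add: scale_sum_right)
    also have "\<dots> = (\<Sum>r\<in>?S. \<Sum>q\<in>?S. (Pf p q * Qf q r) \<star> B r)"
      by (rule sum.swap)
    also have "\<dots> = (\<Sum>r\<in>?S. (\<Sum>q\<in>?S. Pf p q * Qf q r) \<star> B r)"
      by (simp add: scale_sum_left)
    finally show ?thesis .
  qed
  have key2: "B p = (\<Sum>r\<in>?S. (if r = p then 1 else 0) \<star> B r)" if "p \<in> ?S" for p
  proof -
    have "(\<Sum>r\<in>?S. (if r = p then 1 else 0) \<star> B r) = (\<Sum>r\<in>?S. if r = p then B r else 0)"
      by (rule sum.cong) auto
    also have "\<dots> = B p" using that by simp
    finally show ?thesis by simp
  qed
  have PQ: "(\<Sum>q\<in>?S. Pf p q * Qf q r) = (if r = p then 1 else 0)" if "p \<in> ?S" "r \<in> ?S" for p r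
    using indep_fam_eq[OF b _ that(2), of "\<lambda>r. \<Sum>q\<in>?S. Pf p q * Qf q r" "\<lambda>r. if r = p then 1 else 0"]
      key1[of p] key2[OF that(1)] by simp
  define P where "P = mat N N (\<lambda>(p, q). Pf p q)"
  define Q where "Q = mat N N (\<lambda>(p, q). Qf p q)"
  have P: "P \<in> carrier_mat N N" and Q: "Q \<in> carrier_mat N N" by (auto simp: P_def Q_def)
  have "P * Q = 1\<^sub>m N"
    by (rule eq_matI) (auto simp: P_def Q_def scalar_prod_def PQ)
  then have QP: "Q * P = 1\<^sub>m N" by (rule mat_mult_left_right_inverse_comm[OF P Q])
  have QP': "(\<Sum>r\<in>?S. Qf p r * Pf r p') = (if p = p' then 1 else 0)" if "p \<in> ?S" "p' \<in> ?S" for p p'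
  proof -
    have "(Q * P) $$ (p, p') = (\<Sum>r\<in>?S. Qf p r * Pf r p')"
      using that by (simp add: P_def Q_def scalar_prod_def)
    then show ?thesis using that QP by simp
  qed
  show ?thesis
    unfolding ifam_def
  proof (intro allI impI ballI)
    fix g p' assume g0: "(\<Sum>p\<in>?S. g p \<star> C p) = 0" and p': "p' \<in> ?S"
    have "(\<Sum>p\<in>?S. g p \<star> C p) = (\<Sum>p\<in>?S. g p \<star> (\<Sum>r\<in>?S. Qf p r \<star> B r))"
      by (rule sum.cong[OF refl]) (metis Qf)
    also have "\<dots> = (\<Sum>p\<in>?S. \<Sum>r\<in>?S. (g p * Qf p r) \<star> B r)"
      by (simp add: scale_sum_right)
    also have "\<dots> = (\<Sum>r\<in>?S. \<Sum>p\<in>?S. (g p * Qf p r) \<star> B r)"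
      by (rule sum.swap)
    also have "\<dots> = (\<Sum>r\<in>?S. (\<Sum>p\<in>?S. g p * Qf p r) \<star> B r)"
      by (simp add: scale_sum_left)
    finally have zz: "(\<Sum>r\<in>?S. (\<Sum>p\<in>?S. g p * Qf p r) \<star> B r) = 0" using g0 by simp
    have z: "(\<Sum>p\<in>?S. g p * Qf p r) = 0" if "r \<in> ?S" for r
      by (rule indep_famD[OF b zz that])
    have "g p' = (\<Sum>p\<in>?S. g p * (if p = p' then 1 else 0))"
      using p' by (simp add: if_distrib cong: if_cong)
    also have "\<dots> = (\<Sum>p\<in>?S. g p * (\<Sum>r\<in>?S. Qf p r * Pf r p'))"
      by (rule sum.cong[OF refl], subst QP'[OF _ p']) auto
    also have "\<dots> = (\<Sum>p\<in>?S. \<Sum>r\<in>?S. g p * Qf p r * Pf r p')"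
      by (simp add: sum_distrib_left mult.assoc)
    also have "\<dots> = (\<Sum>r\<in>?S. \<Sum>p\<in>?S. g p * Qf p r * Pf r p')"
      by (rule sum.swap)
    also have "\<dots> = (\<Sum>r\<in>?S. (\<Sum>p\<in>?S. g p * Qf p r) * Pf r p')"
      by (simp add: sum_distrib_right)
    also have "\<dots> = 0" by (simp add: z)
    finally show "g p' = 0" .
  qed
qed

lemma span_count:
  assumes fin: "finite I" and b: "local.ifam b I" and sb: "span (b ` I) = UNIV" and sc: "span (c ` I) = UNIV"
  shows "local.ifam c I"
proof -
  obtain e where e: "bij_betw e {0..<card I} I" using ex_bij_betw_nat_finite[OF fin] by blast
  have img: "e ` {0..<card I} = I" using e by (simp add: bij_betw_def)
  have B: "local.ifam (\<lambda>p. b (e p)) {0..<card I}" by (rule indep_fam_bij[OF e b])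
  have 1: "(\<lambda>p. b (e p)) ` {0..<card I} = b ` I" "(\<lambda>p. c (e p)) ` {0..<card I} = c ` I"
    by (metis image_image img)+
  have C: "local.ifam (\<lambda>p. c (e p)) {0..<card I}"
    by (rule span_count_aux[OF B]) (use sb sc 1 in auto)
  have e': "bij_betw (the_inv_into {0..<card I} e) I {0..<card I}"
    by (rule bij_betw_the_inv_into[OF e])
  have "local.ifam (\<lambda>j. c (e (the_inv_into {0..<card I} e j))) I"
    by (rule indep_fam_bij[OF e' C])
  moreover have "inj_on e {0..<card I}" using e by (simp add: bij_betw_def)
  ultimately show ?thesis
    by (subst ifam_cong[where f' = "\<lambda>j. c (e (the_inv_into {0..<card I} e j))"])
       (auto simp: f_the_inv_into_f img)
qed

end

definition emat :: "nat \<Rightarrow> nat \<times> nat \<Rightarrow> 'r::comm_ring_1 mat" where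
  "emat n k = mat n n (\<lambda>pq. if pq = k then 1 else 0)"

lemma emat_carrier[simp]: "emat n k \<in> carrier_mat n n"
  unfolding emat_def by (rule mat_carrier)

locale calg = Modules.module sc for sc :: "'r::comm_ring_1 \<Rightarrow> 'a::ring_1 \<Rightarrow> 'a" +
  fixes i :: "'a \<Rightarrow> 'a"
  assumes sc_mult1: "sc r (x * y) = sc r x * y" and sc_mult2: "sc r (x * y) = x * sc r y"
    and i_add: "i (x + y) = i x + i y" and i_sc: "i (sc r x) = sc r (i x)"
    and i_mult: "i (x * y) = i y * i x" and i_i: "i (i x) = x"
begin

lemma sc_left: "sc r x = sc r 1 * x"
  using sc_mult1[of r 1 x] by simp

lemma i_zero[simp]: "i 0 = 0"
  using i_add[of 0 0] by simp

lemma i_minus: "i (- x) = - i x"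
proof -
  have "i x + i (- x) = 0" using i_add[of x "- x"] by simp
  then show ?thesis by (metis add.inverse_unique)
qed

lemma i_diff: "i (x - y) = i x - i y"
  using i_add[of x "- y"] i_minus[of y] by simp

lemma ideal_subspace: "two_sided_ideal I \<Longrightarrow> subspace I"
  unfolding two_sided_ideal_def subspace_def by (metis sc_left)

lemma ci_carrier: "cell_iso sc i n rho I I' alpha \<Longrightarrow> x \<in> I' \<Longrightarrow> alpha x \<in> carrier_mat n n"
  unfolding cell_iso_def by blast

lemma ci_img: "cell_iso sc i n rho I I' alpha \<Longrightarrow> alpha ` I' = carrier_mat n n"
  unfolding cell_iso_def by (elim conjE) assumption
lemma ci_add: "cell_iso sc i n rho I I' alpha \<Longrightarrow> x \<in> I' \<Longrightarrow> y \<in> I' \<Longrightarrow> alpha (x + y) = alpha x + alpha y"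
  unfolding cell_iso_def by blast
lemma ci_sc: "cell_iso sc i n rho I I' alpha \<Longrightarrow> x \<in> I' \<Longrightarrow> alpha (sc r x) = r \<cdot>\<^sub>m alpha x"
  unfolding cell_iso_def by blast
lemma ci_kernel: "cell_iso sc i n rho I I' alpha \<Longrightarrow> x \<in> I' \<Longrightarrow> alpha x = 0\<^sub>m n n \<longleftrightarrow> x \<in> I"
  unfolding cell_iso_def by blast
lemma ci_left: "cell_iso sc i n rho I I' alpha \<Longrightarrow> x \<in> I' \<Longrightarrow> alpha (a * x) = rho a * alpha x"
  unfolding cell_iso_def by blast
lemma ci_i: "cell_iso sc i n rho I I' alpha \<Longrightarrow> x \<in> I' \<Longrightarrow> alpha (i x) = transpose_mat (alpha x)"
  unfolding cell_iso_def by blast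

lemma ci_zero:
  assumes ci: "cell_iso sc i n rho I I' alpha" and sub: "subspace I'"
  shows "alpha 0 = 0\<^sub>m n n"
proof -
  have 0: "0 \<in> I'" using sub by (rule subspace_0)
  have "alpha (sc 0 0) = 0 \<cdot>\<^sub>m alpha 0" using ci 0 unfolding cell_iso_def by blast
  moreover have "0 \<cdot>\<^sub>m alpha 0 = 0\<^sub>m n n" using ci_carrier[OF ci 0] by (intro eq_matI) auto
  ultimately show ?thesis by simp
qed

lemma ci_sum:
  assumes ci: "cell_iso sc i n rho I I' alpha" and sub: "subspace I'" and K: "finite K"
    and x: "\<And>k. k \<in> K \<Longrightarrow> x k \<in> I'"
  shows "alpha (\<Sum>k\<in>K. sc (r k) (x k)) \<in> carrier_mat n n \<and>
    (\<forall>p<n. \<forall>q<n. alpha (\<Sum>k\<in>K. sc (r k) (x k)) $$ (p, q) = (\<Sum>k\<in>K. r k * alpha (x k) $$ (p, q)))"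
  using K x
proof (induct K rule: finite_induct)
  case empty
  then show ?case using ci_zero[OF ci sub] by simp
next
  case (insert k K)
  have xk: "sc (r k) (x k) \<in> I'" using insert sub subspace_scale by blast
  have rest: "(\<Sum>k\<in>K. sc (r k) (x k)) \<in> I'"
    using insert sub by (auto intro!: subspace_sum subspace_scale)
  have "alpha (\<Sum>k\<in>insert k K. sc (r k) (x k)) = alpha (sc (r k) (x k)) + alpha (\<Sum>k\<in>K. sc (r k) (x k))"
    using insert ci xk rest unfolding cell_iso_def by simp
  also have "alpha (sc (r k) (x k)) = r k \<cdot>\<^sub>m alpha (x k)"
    using ci insert unfolding cell_iso_def by simp
  finally have eq: "alpha (\<Sum>k\<in>insert k K. sc (r k) (x k)) = r k \<cdot>\<^sub>m alpha (x k) + alpha (\<Sum>k\<in>K. sc (r k) (x k))" .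
  have ck: "alpha (x k) \<in> carrier_mat n n" using ci_carrier[OF ci] insert by simp
  show ?case using insert(3,4) ck unfolding eq by (auto simp: insert(1,2))
qed

lemma ci_lift:
  assumes ci: "cell_iso sc i n rho I I' alpha" and sub: "subspace I'"
    and d: "\<And>k. k \<in> {0..<n} \<times> {0..<n} \<Longrightarrow> d k \<in> I' \<and> alpha (d k) = emat n k"
    and M: "M \<in> carrier_mat n n"
  shows "(\<Sum>k\<in>{0..<n} \<times> {0..<n}. sc (M $$ k) (d k)) \<in> I'"
    and "alpha (\<Sum>k\<in>{0..<n} \<times> {0..<n}. sc (M $$ k) (d k)) = M"
proof -
  let ?K = "{0..<n} \<times> {0..<n}"
  show "(\<Sum>k\<in>?K. sc (M $$ k) (d k)) \<in> I'"
    using d sub by (auto intro!: subspace_sum subspace_scale)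
  have S: "alpha (\<Sum>k\<in>?K. sc (M $$ k) (d k)) \<in> carrier_mat n n \<and>
    (\<forall>p<n. \<forall>q<n. alpha (\<Sum>k\<in>?K. sc (M $$ k) (d k)) $$ (p, q) = (\<Sum>k\<in>?K. M $$ k * alpha (d k) $$ (p, q)))"
    by (rule ci_sum[OF ci sub]) (use d in auto)
  show "alpha (\<Sum>k\<in>?K. sc (M $$ k) (d k)) = M"
  proof (rule eq_matI)
    fix p q assume pq: "p < dim_row M" "q < dim_col M"
    then have pq': "p < n" "q < n" using M by auto
    have "(\<Sum>k\<in>?K. M $$ k * alpha (d k) $$ (p, q)) = (\<Sum>k\<in>?K. if k = (p, q) then M $$ k else 0)"
      by (rule sum.cong[OF refl]) (use d pq' in \<open>auto simp: emat_def\<close>)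
    also have "\<dots> = M $$ (p, q)" using pq' by simp
    finally show "alpha (\<Sum>k\<in>?K. sc (M $$ k) (d k)) $$ (p, q) = M $$ (p, q)"
      using S pq' by simp
  qed (use S M in auto)
qed

lemma ci_ker:
  assumes ci: "cell_iso sc i n rho I I' alpha" and sub: "subspace I'"
    and x: "x \<in> I'" and y: "y \<in> I'" and eq: "alpha x = alpha y"
  shows "x - y \<in> I"
proof -
  have my: "sc (-1) y \<in> I'" using sub y by (rule subspace_scale)
  have a1: "alpha (x + sc (-1) y) = alpha x + alpha (sc (-1) y)"
    using ci x my unfolding cell_iso_def by blast
  have a2: "alpha (sc (-1) y) = (-1) \<cdot>\<^sub>m alpha y"
    using ci y unfolding cell_iso_def by blast
  have "alpha (x + sc (-1) y) = alpha x + (-1) \<cdot>\<^sub>m alpha y" using a1 a2 by simp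
  also have "\<dots> = 0\<^sub>m n n" using eq ci_carrier[OF ci y]
    by (intro eq_matI) auto
  finally have "alpha (x - y) = 0\<^sub>m n n" by (simp add: scale_minus_left)
  moreover have "x - y \<in> I'" using sub x y by (rule subspace_diff)
  ultimately show ?thesis using ci unfolding cell_iso_def by blast
qed

end


locale netL = calg sc i for sc :: "'r::comm_ring_1 \<Rightarrow> 'a::ring_1 \<Rightarrow> 'a" and i +
  fixes Lam :: "'l set" and Le :: "('l \<times> 'l) set" and N :: "'l set \<Rightarrow> 'a set"
  assumes po: "partial_order_on Lam Le" and finL: "finite Lam" and net: "is_cell_net sc i Lam Le N"
begin

lemma le_sub: "(l, m) \<in> Le \<Longrightarrow> l \<in> Lam \<and> m \<in> Lam"
  using po unfolding partial_order_on_def preorder_on_def by blast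
lemma le_refl: "l \<in> Lam \<Longrightarrow> (l, l) \<in> Le"
  using po unfolding partial_order_on_def preorder_on_def refl_on_def by blast
lemma le_trans: "(l, m) \<in> Le \<Longrightarrow> (m, k) \<in> Le \<Longrightarrow> (l, k) \<in> Le"
  using po unfolding partial_order_on_def preorder_on_def trans_def by blast
lemma le_antisym: "(l, m) \<in> Le \<Longrightarrow> (m, l) \<in> Le \<Longrightarrow> l = m"
  using po unfolding partial_order_on_def antisym_def by blast

abbreviation "ge l \<equiv> ideal_ge Lam Le l"
abbreviation "gt l \<equiv> ideal_gt Lam Le l"
abbreviation "oi G \<equiv> order_ideal Lam Le G"

lemma oi_ge: "oi (ge l)"
  unfolding order_ideal_def ideal_ge_def
proof (intro conjI ballI impI)
  fix x m assume "x \<in> {m \<in> Lam. (l, m) \<in> Le}" "m \<in> Lam" "(x, m) \<in> Le"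
  then show "m \<in> {m \<in> Lam. (l, m) \<in> Le}" using le_trans[of l x m] by simp
qed auto

lemma oi_gt: "oi (gt l)"
  unfolding order_ideal_def ideal_gt_def strictly_above_def
proof (intro conjI ballI impI)
  fix x m assume x: "x \<in> {m \<in> Lam. (l, m) \<in> Le \<and> l \<noteq> m}" and "m \<in> Lam" "(x, m) \<in> Le"
  moreover have "l \<noteq> m"
  proof
    assume "l = m"
    then have "x = l" using le_antisym[of x l] x \<open>(x, m) \<in> Le\<close> by simp
    then show False using x by simp
  qed
  ultimately show "m \<in> {m \<in> Lam. (l, m) \<in> Le \<and> l \<noteq> m}" using le_trans[of l x m] by simp
qed auto

lemma gt_sub_ge: "gt l \<subseteq> ge l"
  unfolding ideal_gt_def ideal_ge_def strictly_above_def by blast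

lemma ge_minus_gt: "l \<in> Lam \<Longrightarrow> ge l - gt l = {l}"
  unfolding ideal_gt_def ideal_ge_def strictly_above_def using le_refl by blast

lemma oi_Lam: "oi Lam"
  unfolding order_ideal_def by blast

lemma net1: "\<forall>G. oi G \<longrightarrow> two_sided_ideal (N G) \<and> i ` N G \<subseteq> N G"
  using net unfolding is_cell_net_def by (elim conjE) assumption
lemma net2: "N {} = {0}"
  using net unfolding is_cell_net_def by (elim conjE) assumption
lemma net3: "\<forall>G1 G2. oi G1 \<longrightarrow> oi G2 \<longrightarrow> G1 \<subseteq> G2 \<longrightarrow> N G1 \<subseteq> N G2"
  using net unfolding is_cell_net_def by (elim conjE) assumption
lemma net4: "span (\<Union>m\<in>Lam. N (ge m)) = UNIV"
  using net unfolding is_cell_net_def by (elim conjE) assumption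
lemma net5: "\<forall>l\<in>Lam. N (gt l) = span (\<Union>m\<in>gt l. N (ge m))"
  using net unfolding is_cell_net_def by (elim conjE) assumption
lemma net6: "\<forall>l\<in>Lam. \<exists>n rho. left_module_rep sc n rho \<and>
        (\<forall>G G'. oi G \<longrightarrow> oi G' \<longrightarrow> G \<subseteq> G' \<longrightarrow> G' - G = {l} \<longrightarrow>
           (\<exists>alpha. cell_iso sc i n rho (N G) (N G') alpha))"
  using net unfolding is_cell_net_def by (elim conjE) assumption

lemma N_ideal: "oi G \<Longrightarrow> two_sided_ideal (N G)"
  using net1 by blast

lemma N_sub: "oi G \<Longrightarrow> subspace (N G)"
  using N_ideal ideal_subspace by blast

lemma N_i: "oi G \<Longrightarrow> x \<in> N G \<Longrightarrow> i x \<in> N G"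
  using net1 by blast

lemma N_mono: "oi G1 \<Longrightarrow> oi G2 \<Longrightarrow> G1 \<subseteq> G2 \<Longrightarrow> N G1 \<subseteq> N G2"
  using net3 by blast

lemma N_empty: "N {} = {0}"
  by (rule net2)

lemma N_gt: "l \<in> Lam \<Longrightarrow> N (gt l) = span (\<Union>m\<in>gt l. N (ge m))"
  using net5 by blast

lemma N_Lam: "N Lam = UNIV"
proof -
  have sub: "N (ge m) \<subseteq> N Lam" if "m \<in> Lam" for m
    by (rule N_mono[OF oi_ge oi_Lam]) (simp add: ideal_ge_def)
  have "span (\<Union>m\<in>Lam. N (ge m)) \<subseteq> N Lam"
    by (rule span_minimal[OF _ N_sub[OF oi_Lam]]) (use sub in blast)
  then show ?thesis using net4 by blast
qed

definition goodrep :: "'l \<Rightarrow> nat \<Rightarrow> ('a \<Rightarrow> 'r mat) \<Rightarrow> bool" where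
  "goodrep l n rho \<longleftrightarrow> left_module_rep sc n rho \<and>
        (\<forall>G G'. oi G \<longrightarrow> oi G' \<longrightarrow> G \<subseteq> G' \<longrightarrow> G' - G = {l} \<longrightarrow>
           (\<exists>alpha. cell_iso sc i n rho (N G) (N G') alpha))"

definition nr :: "'l \<Rightarrow> nat \<times> ('a \<Rightarrow> 'r mat)" where
  "nr l = (SOME p. goodrep l (fst p) (snd p))"

definition "nn l = fst (nr l)"
definition "rh l = snd (nr l)"

lemma nr_good:
  assumes "l \<in> Lam"
  shows "goodrep l (nn l) (rh l)"
proof -
  have "\<exists>n rho. goodrep l n rho" using net6 assms unfolding goodrep_def by (rule bspec)
  then obtain n rho where "goodrep l n rho" by (elim exE)
  then have "\<exists>p. goodrep l (fst p) (snd p)" by (intro exI[of _ "(n, rho)"]) simp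
  from someI_ex[OF this] show ?thesis unfolding nn_def rh_def nr_def .
qed

lemma nr_prop:
  assumes "l \<in> Lam"
  shows "left_module_rep sc (nn l) (rh l) \<and>
        (\<forall>G G'. oi G \<longrightarrow> oi G' \<longrightarrow> G \<subseteq> G' \<longrightarrow> G' - G = {l} \<longrightarrow>
           (\<exists>alpha. cell_iso sc i (nn l) (rh l) (N G) (N G') alpha))"
  using nr_good[OF assms] unfolding goodrep_def .

lemma iso_ex:
  "l \<in> Lam \<Longrightarrow> oi G \<Longrightarrow> oi G' \<Longrightarrow> G \<subseteq> G' \<Longrightarrow> G' - G = {l} \<Longrightarrow>
     \<exists>alpha. cell_iso sc i (nn l) (rh l) (N G) (N G') alpha"
proof -
  assume "l \<in> Lam" "oi G" "oi G'" "G \<subseteq> G'" "G' - G = {l}"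
  with nr_prop[of l] show ?thesis by simp
qed

definition "al l = (SOME alpha. cell_iso sc i (nn l) (rh l) (N (gt l)) (N (ge l)) alpha)"

lemma al_iso: "l \<in> Lam \<Longrightarrow> cell_iso sc i (nn l) (rh l) (N (gt l)) (N (ge l)) (al l)"
proof -
  assume l: "l \<in> Lam"
  have "\<exists>alpha. cell_iso sc i (nn l) (rh l) (N (gt l)) (N (ge l)) alpha"
    by (rule iso_ex[OF l oi_gt oi_ge gt_sub_ge ge_minus_gt[OF l]])
  then show ?thesis unfolding al_def by (rule someI_ex)
qed

definition "TT l = {0..<nn l}"

definition "cc l s t = (SOME x. x \<in> N (ge l) \<and> al l x = emat (nn l) (s, t))"


lemma cc_prop:
  assumes "l \<in> Lam"
  shows "cc l s t \<in> N (ge l) \<and> al l (cc l s t) = emat (nn l) (s, t)"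
proof -
  have "emat (nn l) (s, t) \<in> al l ` N (ge l)"
    by (subst ci_img[OF al_iso[OF assms]]) (rule emat_carrier)
  then obtain x where "x \<in> N (ge l)" "emat (nn l) (s, t) = al l x" by (rule imageE)
  then have "\<exists>x. x \<in> N (ge l) \<and> al l x = emat (nn l) (s, t)" by (intro exI[of _ x] conjI) simp_all
  from someI_ex[OF this] show ?thesis unfolding cc_def .
qed

definition "CS G = {cc m u v | m u v. m \<in> G \<and> u \<in> TT m \<and> v \<in> TT m}"

lemma CS_mono: "G1 \<subseteq> G2 \<Longrightarrow> CS G1 \<subseteq> CS G2"
  unfolding CS_def by blast

lemma gt_card_less:
  assumes "m \<in> gt l"
  shows "card (gt m) < card (gt l)"
proof (rule psubset_card_mono)
  show "finite (gt l)" using finL by (simp add: ideal_gt_def)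
  have "gt m \<subseteq> gt l" using assms le_trans le_antisym
    unfolding ideal_gt_def strictly_above_def by blast
  moreover have "m \<in> gt l - gt m" using assms unfolding ideal_gt_def strictly_above_def by blast
  ultimately show "gt m \<subset> gt l" by blast
qed

lemma span_ge: "l \<in> Lam \<Longrightarrow> N (ge l) \<subseteq> span (CS (ge l))"
proof (induct "card (gt l)" arbitrary: l rule: less_induct)
  case less
  note l = less(2)
  have IH: "N (ge m) \<subseteq> span (CS (ge l))" if "m \<in> gt l" for m
  proof -
    have m: "m \<in> Lam" using that by (simp add: ideal_gt_def)
    have A: "N (ge m) \<subseteq> span (CS (ge m))" using less(1)[OF gt_card_less[OF that] m] .
    have "ge m \<subseteq> ge l" using that le_trans unfolding ideal_gt_def ideal_ge_def strictly_above_def by blast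
    then have "span (CS (ge m)) \<subseteq> span (CS (ge l))" by (intro span_mono CS_mono)
    with A show ?thesis by (rule order_trans)
  qed
  have gt_sp: "N (gt l) \<subseteq> span (CS (ge l))"
    unfolding N_gt[OF l] by (rule span_minimal) (use IH in auto)
  show ?case
  proof
    fix x assume x: "x \<in> N (ge l)"
    let ?K = "{0..<nn l} \<times> {0..<nn l}"
    let ?M = "al l x"
    let ?y = "\<Sum>k\<in>?K. sc (?M $$ k) (cc l (fst k) (snd k))"
    have ci: "cell_iso sc i (nn l) (rh l) (N (gt l)) (N (ge l)) (al l)" by (rule al_iso[OF l])
    have d: "\<And>k. k \<in> ?K \<Longrightarrow> cc l (fst k) (snd k) \<in> N (ge l) \<and> al l (cc l (fst k) (snd k)) = emat (nn l) k"
      using cc_prop[OF l] by auto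
    have M: "?M \<in> carrier_mat (nn l) (nn l)" by (rule ci_carrier[OF ci x])
    have L1: "?y \<in> N (ge l)" and L2: "al l ?y = ?M"
      using ci_lift[OF ci N_sub[OF oi_ge] d M] by auto
    have "x - ?y \<in> N (gt l)" by (rule ci_ker[OF ci N_sub[OF oi_ge] x L1]) (rule L2[symmetric])
    then have 1: "x - ?y \<in> span (CS (ge l))" using gt_sp by blast
    have inC: "cc l (fst k) (snd k) \<in> CS (ge l)" if "k \<in> ?K" for k
    proof -
      have "l \<in> ge l" using l le_refl[OF l] by (simp add: ideal_ge_def)
      then show ?thesis using that unfolding CS_def TT_def
        by (cases k) (simp, intro exI[of _ l] exI[of _ "fst k"] exI[of _ "snd k"], simp)
    qed
    have 2: "?y \<in> span (CS (ge l))"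
      by (intro span_sum span_scale span_base inC)
    have "x = (x - ?y) + ?y" by simp
    then show "x \<in> span (CS (ge l))" using span_add[OF 1 2] by simp
  qed
qed

lemma span_gt: "l \<in> Lam \<Longrightarrow> N (gt l) \<subseteq> span (CS (gt l))"
proof -
  assume l: "l \<in> Lam"
  have "N (ge m) \<subseteq> span (CS (gt l))" if "m \<in> gt l" for m
  proof -
    have m: "m \<in> Lam" using that by (simp add: ideal_gt_def)
    have A: "N (ge m) \<subseteq> span (CS (ge m))" by (rule span_ge[OF m])
    have "ge m \<subseteq> gt l" using that le_trans le_antisym unfolding ideal_gt_def ideal_ge_def strictly_above_def by blast
    then have "span (CS (ge m)) \<subseteq> span (CS (gt l))" by (intro span_mono CS_mono)
    with A show ?thesis by (rule order_trans)
  qed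
  then show ?thesis unfolding N_gt[OF l] by (intro span_minimal) auto
qed

lemma cell_upper_eq: "cell_upper sc Lam Le TT cc l = span (CS (gt l))"
  unfolding cell_upper_def CS_def ideal_gt_def by simp


lemma cc_in: "l \<in> Lam \<Longrightarrow> cc l s t \<in> N (ge l)"
  using cc_prop by blast
lemma al_cc: "l \<in> Lam \<Longrightarrow> al l (cc l s t) = emat (nn l) (s, t)"
  using cc_prop by blast

lemma rh_carrier: "l \<in> Lam \<Longrightarrow> rh l a \<in> carrier_mat (nn l) (nn l)"
  using nr_prop unfolding left_module_rep_def by blast

lemma sum_emat_right:
  fixes A :: "'r mat"
  assumes "s < n" "p < n"
  shows "(\<Sum>w\<in>{0..<n}. A $$ (p, w) * (if (w, q) = (s, t) then 1 else 0)) = (if q = t then A $$ (p, s) else 0)"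
proof -
  have "(\<Sum>w\<in>{0..<n}. A $$ (p, w) * (if (w, q) = (s, t) then 1 else 0)) =
        (\<Sum>w\<in>{0..<n}. if w = s then (if q = t then A $$ (p, s) else 0) else 0)"
    by (rule sum.cong) auto
  also have "\<dots> = (if q = t then A $$ (p, s) else 0)" using assms by simp
  finally show ?thesis .
qed

lemma datum_ii:
  assumes l: "l \<in> Lam" and s: "s \<in> TT l" and t: "t \<in> TT l"
  shows "a * cc l s t - (\<Sum>v\<in>TT l. sc (rh l a $$ (v, s)) (cc l v t)) \<in> cell_upper sc Lam Le TT cc l"
proof -
  let ?n = "nn l"
  have ci: "cell_iso sc i ?n (rh l) (N (gt l)) (N (ge l)) (al l)" by (rule al_iso[OF l])
  have sub: "subspace (N (ge l))" by (rule N_sub[OF oi_ge])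
  have x: "a * cc l s t \<in> N (ge l)"
    using N_ideal[OF oi_ge] cc_in[OF l] unfolding two_sided_ideal_def by blast
  have y: "(\<Sum>v\<in>TT l. sc (rh l a $$ (v, s)) (cc l v t)) \<in> N (ge l)"
    by (intro subspace_sum[OF sub] subspace_scale[OF sub] cc_in[OF l])
  have S: "al l (\<Sum>v\<in>TT l. sc (rh l a $$ (v, s)) (cc l v t)) \<in> carrier_mat ?n ?n \<and>
    (\<forall>p<?n. \<forall>q<?n. al l (\<Sum>v\<in>TT l. sc (rh l a $$ (v, s)) (cc l v t)) $$ (p, q) =
        (\<Sum>v\<in>TT l. rh l a $$ (v, s) * al l (cc l v t) $$ (p, q)))"
    by (rule ci_sum[OF ci sub]) (auto simp: TT_def intro: cc_in[OF l])
  have R: "rh l a \<in> carrier_mat ?n ?n" by (rule rh_carrier[OF l])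
  have "al l (a * cc l s t) = rh l a * emat ?n (s, t)"
    using ci_left[OF ci cc_in[OF l]] al_cc[OF l] by simp
  also have "\<dots> = al l (\<Sum>v\<in>TT l. sc (rh l a $$ (v, s)) (cc l v t))"
  proof (rule eq_matI)
    fix p q assume pq: "p < dim_row (al l (\<Sum>v\<in>TT l. sc (rh l a $$ (v, s)) (cc l v t)))"
      "q < dim_col (al l (\<Sum>v\<in>TT l. sc (rh l a $$ (v, s)) (cc l v t)))"
    then have pq': "p < ?n" "q < ?n" using S by auto
    have "(rh l a * emat ?n (s, t)) $$ (p, q) = (\<Sum>w\<in>{0..<?n}. rh l a $$ (p, w) * (if (w, q) = (s, t) then 1 else 0))"
      using R pq' by (simp add: emat_def scalar_prod_def)
    also have "\<dots> = (if q = t then rh l a $$ (p, s) else 0)"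
      by (rule sum_emat_right) (use s pq' in \<open>auto simp: TT_def\<close>)
    also have "\<dots> = (\<Sum>v\<in>TT l. rh l a $$ (v, s) * al l (cc l v t) $$ (p, q))"
    proof -
      have "(\<Sum>v\<in>TT l. rh l a $$ (v, s) * al l (cc l v t) $$ (p, q)) =
            (\<Sum>v\<in>TT l. if v = p then (if q = t then rh l a $$ (p, s) else 0) else 0)"
        by (rule sum.cong[OF refl]) (use pq' in \<open>auto simp: al_cc[OF l] emat_def TT_def\<close>)
      also have "\<dots> = (if q = t then rh l a $$ (p, s) else 0)" using pq' by (simp add: TT_def)
      finally show ?thesis by simp
    qed
    also have "\<dots> = al l (\<Sum>v\<in>TT l. sc (rh l a $$ (v, s)) (cc l v t)) $$ (p, q)"
      using S pq' by simp
    finally show "(rh l a * emat ?n (s, t)) $$ (p, q) = al l (\<Sum>v\<in>TT l. sc (rh l a $$ (v, s)) (cc l v t)) $$ (p, q)" .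
  qed (use S R in \<open>auto simp: emat_def\<close>)
  finally have "al l (a * cc l s t) = al l (\<Sum>v\<in>TT l. sc (rh l a $$ (v, s)) (cc l v t))" .
  from ci_ker[OF ci sub x y this] have "a * cc l s t - (\<Sum>v\<in>TT l. sc (rh l a $$ (v, s)) (cc l v t)) \<in> N (gt l)" .
  then show ?thesis using span_gt[OF l] cell_upper_eq by auto
qed

lemma datum_iii:
  assumes l: "l \<in> Lam"
  shows "i (cc l s t) - cc l t s \<in> cell_upper sc Lam Le TT cc l"
proof -
  have ci: "cell_iso sc i (nn l) (rh l) (N (gt l)) (N (ge l)) (al l)" by (rule al_iso[OF l])
  have x: "i (cc l s t) \<in> N (ge l)" by (rule N_i[OF oi_ge cc_in[OF l]])
  have "al l (i (cc l s t)) = transpose_mat (emat (nn l) (s, t))"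
    using ci_i[OF ci cc_in[OF l]] al_cc[OF l] by simp
  also have "\<dots> = al l (cc l t s)"
    unfolding al_cc[OF l] by (rule eq_matI) (auto simp: emat_def)
  finally have "i (cc l s t) - cc l t s \<in> N (gt l)"
    by (rule ci_ker[OF ci N_sub[OF oi_ge] x cc_in[OF l]])
  then show ?thesis using span_gt[OF l] cell_upper_eq by auto
qed

definition "IxG G = {(l, s, t). l \<in> G \<and> s \<in> TT l \<and> t \<in> TT l}"

lemma fin_IxG: "G \<subseteq> Lam \<Longrightarrow> finite (IxG G)"
proof -
  assume G: "G \<subseteq> Lam"
  have "IxG G \<subseteq> Sigma Lam (\<lambda>l. TT l \<times> TT l)" using G by (auto simp: IxG_def)
  moreover have "finite (Sigma Lam (\<lambda>l. TT l \<times> TT l))" using finL by (auto simp: TT_def)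
  ultimately show ?thesis by (rule finite_subset)
qed

lemma oi_sub: "oi G \<Longrightarrow> G \<subseteq> Lam"
  unfolding order_ideal_def by blast

lemma exists_minimal:
  assumes G: "G \<subseteq> Lam" "G \<noteq> {}"
  obtains l where "l \<in> G" "\<And>x. x \<in> G \<Longrightarrow> (x, l) \<in> Le \<Longrightarrow> x = l"
proof -
  have finG: "finite G" using G finL finite_subset by blast
  let ?f = "\<lambda>x. card (ge x)"
  have "Max (?f ` G) \<in> ?f ` G" using finG G by (intro Max_in) auto
  then obtain l where l: "l \<in> G" "?f l = Max (?f ` G)" by (auto simp: image_iff)
  have "x = l" if x: "x \<in> G" "(x, l) \<in> Le" for x
  proof (rule ccontr)
    assume ne: "x \<noteq> l"
    have "ge l \<subseteq> ge x" using x le_trans unfolding ideal_ge_def by blast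
    moreover have "x \<in> ge x" using x G le_refl unfolding ideal_ge_def by blast
    moreover have "x \<notin> ge l" using x ne le_antisym unfolding ideal_ge_def by blast
    ultimately have "ge l \<subset> ge x" by blast
    moreover have "finite (ge x)" using finL by (simp add: ideal_ge_def)
    ultimately have "?f l < ?f x" by (rule psubset_card_mono[rotated])
    moreover have "?f x \<le> Max (?f ` G)" using finG x by (intro Max_ge) auto
    ultimately show False using l by simp
  qed
  then show ?thesis using that l by blast
qed


lemma ifam_empty: "local.ifam b {}"
  unfolding ifam_def by simp

lemma exists_basis: "oi G \<Longrightarrow> \<exists>b. local.ifam b (IxG G) \<and> span (b ` IxG G) = N G"
proof (induct "card G" arbitrary: G rule: less_induct)
  case less
  note G = less(2)
  show ?case
  proof (cases "G = {}")
    case True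
    have "IxG G = {}" using True by (simp add: IxG_def)
    then show ?thesis using True N_empty ifam_empty[of "\<lambda>_. 0"] by (intro exI[of _ "\<lambda>_. 0"]) simp
  next
    case False
    have GL: "G \<subseteq> Lam" by (rule oi_sub[OF G])
    have finG: "finite G" using GL finL finite_subset by blast
    obtain l where l: "l \<in> G" and lmin: "\<And>x. x \<in> G \<Longrightarrow> (x, l) \<in> Le \<Longrightarrow> x = l"
      using exists_minimal[OF GL False] by blast
    have lL: "l \<in> Lam" using l GL by blast
    define G0 where "G0 = G - {l}"
    have G0: "oi G0"
      unfolding order_ideal_def
    proof (intro conjI ballI impI)
      show "G0 \<subseteq> Lam" using GL G0_def by blast
      fix y z assume y: "y \<in> G0" and z: "z \<in> Lam" and yz: "(y, z) \<in> Le"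
      have "z \<in> G" using G y z yz unfolding order_ideal_def G0_def by blast
      moreover have "z \<noteq> l" using lmin y yz G0_def by blast
      ultimately show "z \<in> G0" by (simp add: G0_def)
    qed
    have cardG0: "card G0 < card G" using finG l unfolding G0_def by (rule card_Diff1_less)
    obtain b0 where b0: "local.ifam b0 (IxG G0)" and sb0: "span (b0 ` IxG G0) = N G0"
      using less(1)[OF cardG0 G0] by blast
    have "\<exists>alpha. cell_iso sc i (nn l) (rh l) (N G0) (N G) alpha"
      by (rule iso_ex[OF lL G0 G]) (use l in \<open>auto simp: G0_def\<close>)
    then obtain alpha where ci: "cell_iso sc i (nn l) (rh l) (N G0) (N G) alpha" by (elim exE)
    let ?n = "nn l"
    let ?K = "{0..<?n} \<times> {0..<?n}"
    have subG: "subspace (N G)" by (rule N_sub[OF G])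
    have subG0: "subspace (N G0)" by (rule N_sub[OF G0])
    define d where "d k = (SOME x. x \<in> N G \<and> alpha x = emat ?n k)" for k
    have d: "d k \<in> N G \<and> alpha (d k) = emat ?n k" for k
    proof -
      have "emat ?n k \<in> alpha ` N G" by (subst ci_img[OF ci]) (rule emat_carrier)
      then obtain x where "x \<in> N G" "emat ?n k = alpha x" by (rule imageE)
      then have "\<exists>x. x \<in> N G \<and> alpha x = emat ?n k" by (intro exI[of _ x] conjI) simp_all
      from someI_ex[OF this] show ?thesis unfolding d_def .
    qed
    define b where "b j = (if fst j = l then d (snd j) else b0 j)" for j
    have IL: "IxG G = IxG G0 \<union> Pair l ` ?K"
      using l by (auto simp: IxG_def G0_def TT_def)
    have disj: "IxG G0 \<inter> Pair l ` ?K = {}"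
      by (auto simp: IxG_def G0_def)
    have fin0: "finite (IxG G0)" using G0_def GL fin_IxG by blast
    have b_G0: "b j = b0 j" if "j \<in> IxG G0" for j
      using that by (auto simp: b_def IxG_def G0_def)
    have b_l: "b (l, k) = d k" for k by (simp add: b_def)
    have N0G: "N G0 \<subseteq> N G" by (rule N_mono[OF G0 G]) (simp add: G0_def)
    have span_eq: "span (b ` IxG G) = N G"
    proof
      have "b ` IxG G \<subseteq> N G"
      proof
        fix x assume "x \<in> b ` IxG G"
        then obtain j where j: "j \<in> IxG G" "x = b j" by blast
        show "x \<in> N G"
        proof (cases "j \<in> IxG G0")
          case True
          then have "b0 j \<in> N G0" using sb0 span_base[of "b0 j" "b0 ` IxG G0"] by blast
          then show ?thesis using j True b_G0 N0G by auto
        next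
          case False
          then obtain k where "j = (l, k)" using j IL by blast
          then show ?thesis using j d b_l by simp
        qed
      qed
      then show "span (b ` IxG G) \<subseteq> N G" by (rule span_minimal[OF _ subG])
    next
      show "N G \<subseteq> span (b ` IxG G)"
      proof
        fix x assume x: "x \<in> N G"
        let ?y = "\<Sum>k\<in>?K. sc (alpha x $$ k) (d k)"
        have dK: "\<And>k. k \<in> ?K \<Longrightarrow> d k \<in> N G \<and> alpha (d k) = emat ?n k" using d by blast
        have M: "alpha x \<in> carrier_mat ?n ?n" by (rule ci_carrier[OF ci x])
        have L1: "?y \<in> N G" and L2: "alpha ?y = alpha x"
          using ci_lift[OF ci subG dK M] by auto
        have "x - ?y \<in> N G0" by (rule ci_ker[OF ci subG x L1]) (rule L2[symmetric])
        then have "x - ?y \<in> span (b0 ` IxG G0)" using sb0 by simp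
        moreover have "b0 ` IxG G0 \<subseteq> b ` IxG G" using b_G0 IL by force
        ultimately have 1: "x - ?y \<in> span (b ` IxG G)" using span_mono by blast
        have "d k \<in> b ` IxG G" if "k \<in> ?K" for k
          using that IL b_l by (metis UnI2 image_eqI)
        then have 2: "?y \<in> span (b ` IxG G)"
          by (intro span_sum span_scale span_base)
        have "x = (x - ?y) + ?y" by simp
        then show "x \<in> span (b ` IxG G)" using span_add[OF 1 2] by simp
      qed
    qed
    have ifam_b: "local.ifam b (IxG G)"
      unfolding ifam_def
    proof (intro allI impI ballI)
      fix g j assume g0: "(\<Sum>j\<in>IxG G. sc (g j) (b j)) = 0" and j: "j \<in> IxG G"
      define u where "u = (\<Sum>j\<in>IxG G0. sc (g j) (b0 j))"
      define v where "v = (\<Sum>k\<in>?K. sc (g (l, k)) (d k))"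
      have "(\<Sum>j\<in>IxG G. sc (g j) (b j)) = (\<Sum>j\<in>IxG G0. sc (g j) (b j)) + (\<Sum>j\<in>Pair l ` ?K. sc (g j) (b j))"
        unfolding IL by (rule sum.union_disjoint[OF fin0 _ disj]) simp
      also have "(\<Sum>j\<in>IxG G0. sc (g j) (b j)) = u"
        unfolding u_def by (rule sum.cong[OF refl]) (simp add: b_G0)
      also have "(\<Sum>j\<in>Pair l ` ?K. sc (g j) (b j)) = v"
        unfolding v_def by (subst sum.reindex) (auto simp: inj_on_def b_l)
      finally have uv: "u + v = 0" using g0 by simp
      have u0: "u \<in> N G0" unfolding u_def sb0[symmetric]
        by (intro span_sum span_scale span_base) auto
      have vG: "v \<in> N G" unfolding v_def
        by (intro subspace_sum[OF subG] subspace_scale[OF subG]) (use d in blast)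
      have "v = - u" using uv by (simp add: eq_neg_iff_add_eq_0 add.commute)
      then have vG0: "v \<in> N G0" using subspace_neg[OF subG0 u0] by simp
      have av: "alpha v = 0\<^sub>m ?n ?n" using ci_kernel[OF ci vG] vG0 by simp
      have S: "alpha v \<in> carrier_mat ?n ?n \<and>
        (\<forall>p<?n. \<forall>q<?n. alpha v $$ (p, q) = (\<Sum>k\<in>?K. g (l, k) * alpha (d k) $$ (p, q)))"
        unfolding v_def by (rule ci_sum[OF ci subG]) (use d in auto)
      have gl: "g (l, k) = 0" if k: "k \<in> ?K" for k
      proof -
        obtain p q where pq: "k = (p, q)" by (cases k)
        have pq': "p < ?n" "q < ?n" using k pq by auto
        have "(\<Sum>k\<in>?K. g (l, k) * alpha (d k) $$ (p, q)) = (\<Sum>k\<in>?K. if k = (p, q) then g (l, k) else 0)"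
          by (rule sum.cong[OF refl]) (use d pq' in \<open>auto simp: emat_def\<close>)
        also have "\<dots> = g (l, (p, q))" using pq' by simp
        finally have "alpha v $$ (p, q) = g (l, (p, q))" using S pq' by simp
        then show ?thesis using av pq pq' by simp
      qed
      have "v = 0" unfolding v_def by (rule sum.neutral) (simp add: gl)
      then have "u = 0" using uv by simp
      then have gG0: "g j = 0" if "j \<in> IxG G0" for j
        using indep_famD[OF b0 _ that] unfolding u_def by blast
      show "g j = 0"
      proof (cases "j \<in> IxG G0")
        case True then show ?thesis by (rule gG0)
      next
        case False
        then obtain k where "j = (l, k)" "k \<in> ?K" using j IL by blast
        then show ?thesis using gl by simp
      qed
    qed
    show ?thesis using ifam_b span_eq by blast
  qed
qed


lemma CS_img: "{cc l s t | l s t. l \<in> G \<and> s \<in> TT l \<and> t \<in> TT l} = (\<lambda>(l, s, t). cc l s t) ` IxG G"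
proof
  show "{cc l s t | l s t. l \<in> G \<and> s \<in> TT l \<and> t \<in> TT l} \<subseteq> (\<lambda>(l, s, t). cc l s t) ` IxG G"
  proof
    fix x assume "x \<in> {cc l s t | l s t. l \<in> G \<and> s \<in> TT l \<and> t \<in> TT l}"
    then obtain l s t where "x = cc l s t" "l \<in> G" "s \<in> TT l" "t \<in> TT l" by blast
    then show "x \<in> (\<lambda>(l, s, t). cc l s t) ` IxG G"
      by (intro image_eqI[where x="(l, s, t)"]) (auto simp: IxG_def)
  qed
qed (auto simp: IxG_def)

lemma CS_Lam_img: "CS Lam = (\<lambda>(l, s, t). cc l s t) ` IxG Lam"
  unfolding CS_def by (rule CS_img)

lemma net_datum: "is_cell_datum sc i Lam Le TT cc"
proof -
  let ?c = "\<lambda>(l, s, t). cc l s t"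
  have finI: "finite (IxG Lam)" by (rule fin_IxG) simp
  have spanC: "span (?c ` IxG Lam) = UNIV"
  proof -
    have "N (ge m) \<subseteq> span (CS Lam)" if "m \<in> Lam" for m
    proof -
      have "CS (ge m) \<subseteq> CS Lam" by (rule CS_mono) (auto simp: ideal_ge_def)
      then show ?thesis using span_ge[OF that] span_mono by blast
    qed
    then have "span (\<Union>m\<in>Lam. N (ge m)) \<subseteq> span (CS Lam)"
      by (intro span_minimal) auto
    then show ?thesis using net4 CS_Lam_img by auto
  qed
  obtain b where b: "local.ifam b (IxG Lam)" and sb: "span (b ` IxG Lam) = N Lam"
    using exists_basis[OF oi_Lam] by blast
  have ifc: "local.ifam ?c (IxG Lam)"
    by (rule span_count[OF finI b]) (use sb N_Lam spanC in auto)
  have inj: "inj_on ?c (IxG Lam)" and ind: "independent (?c ` IxG Lam)"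
    using indep_fam_imp[OF finI ifc] by auto
  have img: "{cc l s t | l s t. l \<in> Lam \<and> s \<in> TT l \<and> t \<in> TT l} = ?c ` IxG Lam"
    by (rule CS_img)
  have Ieq: "IxG Lam = {(l, s, t). l \<in> Lam \<and> s \<in> TT l \<and> t \<in> TT l}" by (simp add: IxG_def)
  show ?thesis
    unfolding is_cell_datum_def
  proof (intro conjI ballI allI)
    show "finite (TT l)" for l by (simp add: TT_def)
    show "inj_on ?c {(l, s, t). l \<in> Lam \<and> s \<in> TT l \<and> t \<in> TT l}" using inj Ieq by simp
    show "independent {cc l s t | l s t. l \<in> Lam \<and> s \<in> TT l \<and> t \<in> TT l}" using ind img by simp
    show "span {cc l s t | l s t. l \<in> Lam \<and> s \<in> TT l \<and> t \<in> TT l} = UNIV" using spanC img by simp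
    show "\<exists>rr. \<forall>t\<in>TT l. a * cc l s t - (\<Sum>v\<in>TT l. sc (rr v) (cc l v t)) \<in> cell_upper sc Lam Le TT cc l"
      if "l \<in> Lam" "s \<in> TT l" for l s a
      by (rule exI[of _ "\<lambda>v. rh l a $$ (v, s)"], intro ballI datum_ii[OF that])
    show "i (cc l s t) - cc l t s \<in> cell_upper sc Lam Le TT cc l" if "l \<in> Lam" for l s t
      by (rule datum_iii[OF that])
  qed
qed

end




locale datL = calg sc i for sc :: "'r::comm_ring_1 \<Rightarrow> 'a::ring_1 \<Rightarrow> 'a" and i +
  fixes Lam :: "'l set" and Le :: "('l \<times> 'l) set" and T :: "'l \<Rightarrow> nat set" and c :: "'l \<Rightarrow> nat \<Rightarrow> nat \<Rightarrow> 'a"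
  assumes po: "partial_order_on Lam Le" and finL: "finite Lam" and dat: "is_cell_datum sc i Lam Le T c"
begin

lemma le_sub: "(l, m) \<in> Le \<Longrightarrow> l \<in> Lam \<and> m \<in> Lam"
  using po unfolding partial_order_on_def preorder_on_def by blast
lemma le_refl: "l \<in> Lam \<Longrightarrow> (l, l) \<in> Le"
  using po unfolding partial_order_on_def preorder_on_def refl_on_def by blast
lemma le_trans: "(l, m) \<in> Le \<Longrightarrow> (m, k) \<in> Le \<Longrightarrow> (l, k) \<in> Le"
  using po unfolding partial_order_on_def preorder_on_def trans_def by blast
lemma le_antisym: "(l, m) \<in> Le \<Longrightarrow> (m, l) \<in> Le \<Longrightarrow> l = m"
  using po unfolding partial_order_on_def antisym_def by blast

abbreviation "ge l \<equiv> ideal_ge Lam Le l"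
abbreviation "gt l \<equiv> ideal_gt Lam Le l"
abbreviation "oi G \<equiv> order_ideal Lam Le G"

lemma oi_ge: "oi (ge l)"
  unfolding order_ideal_def ideal_ge_def
proof (intro conjI ballI impI)
  fix x m assume "x \<in> {m \<in> Lam. (l, m) \<in> Le}" "m \<in> Lam" "(x, m) \<in> Le"
  then show "m \<in> {m \<in> Lam. (l, m) \<in> Le}" using le_trans[of l x m] by simp
qed auto

lemma oi_gt: "oi (gt l)"
  unfolding order_ideal_def ideal_gt_def strictly_above_def
proof (intro conjI ballI impI)
  fix x m assume x: "x \<in> {m \<in> Lam. (l, m) \<in> Le \<and> l \<noteq> m}" and "m \<in> Lam" "(x, m) \<in> Le"
  moreover have "l \<noteq> m"
  proof
    assume "l = m"
    then have "x = l" using le_antisym[of x l] x \<open>(x, m) \<in> Le\<close> by simp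
    then show False using x by simp
  qed
  ultimately show "m \<in> {m \<in> Lam. (l, m) \<in> Le \<and> l \<noteq> m}" using le_trans[of l x m] by simp
qed auto

lemma oi_sub: "oi G \<Longrightarrow> G \<subseteq> Lam"
  unfolding order_ideal_def by blast

lemma oi_up: "oi G \<Longrightarrow> m \<in> G \<Longrightarrow> (m, k) \<in> Le \<Longrightarrow> k \<in> G"
  unfolding order_ideal_def using le_sub by blast

lemma gt_sub: "oi G \<Longrightarrow> m \<in> G \<Longrightarrow> gt m \<subseteq> G"
  unfolding ideal_gt_def strictly_above_def using oi_up by blast

lemma ge_sub: "oi G \<Longrightarrow> m \<in> G \<Longrightarrow> ge m \<subseteq> G"
  unfolding ideal_ge_def using oi_up by blast

lemma dat1: "\<forall>l\<in>Lam. finite (T l)"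
  using dat unfolding is_cell_datum_def by (elim conjE) assumption
lemma dat2: "inj_on (\<lambda>(l, s, t). c l s t) {(l, s, t). l \<in> Lam \<and> s \<in> T l \<and> t \<in> T l}"
  using dat unfolding is_cell_datum_def by (elim conjE) assumption
lemma dat3: "independent {c l s t | l s t. l \<in> Lam \<and> s \<in> T l \<and> t \<in> T l}"
  using dat unfolding is_cell_datum_def by (elim conjE) assumption
lemma dat4: "span {c l s t | l s t. l \<in> Lam \<and> s \<in> T l \<and> t \<in> T l} = UNIV"
  using dat unfolding is_cell_datum_def by (elim conjE) assumption
lemma dat5: "\<forall>l\<in>Lam. \<forall>s\<in>T l. \<forall>a. \<exists>rr :: nat \<Rightarrow> 'r. \<forall>t\<in>T l.
        a * c l s t - (\<Sum>v\<in>T l. sc (rr v) (c l v t)) \<in> cell_upper sc Lam Le T c l"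
  using dat unfolding is_cell_datum_def by (elim conjE) assumption
lemma dat6: "\<forall>l\<in>Lam. \<forall>s\<in>T l. \<forall>t\<in>T l. i (c l s t) - c l t s \<in> cell_upper sc Lam Le T c l"
  using dat unfolding is_cell_datum_def by (elim conjE) assumption

definition "Ix = {(l, s, t). l \<in> Lam \<and> s \<in> T l \<and> t \<in> T l}"
definition "cf = (\<lambda>(l, s, t). c l s t)"

lemma cf_simp[simp]: "cf (l, s, t) = c l s t"
  by (simp add: cf_def)

lemma Ix_iff[simp]: "(l, s, t) \<in> Ix \<longleftrightarrow> l \<in> Lam \<and> s \<in> T l \<and> t \<in> T l"
  by (simp add: Ix_def)

lemma finIx: "finite Ix"
proof -
  have "Ix \<subseteq> Sigma Lam (\<lambda>l. T l \<times> T l)" by (auto simp: Ix_def)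
  moreover have "finite (Sigma Lam (\<lambda>l. T l \<times> T l))" using finL dat1 by auto
  ultimately show ?thesis by (rule finite_subset)
qed

lemma img_gen: "{c l s t | l s t. l \<in> G \<and> l \<in> Lam \<and> s \<in> T l \<and> t \<in> T l} = cf ` {j \<in> Ix. fst j \<in> G}"
proof
  show "{c l s t | l s t. l \<in> G \<and> l \<in> Lam \<and> s \<in> T l \<and> t \<in> T l} \<subseteq> cf ` {j \<in> Ix. fst j \<in> G}"
  proof
    fix x assume "x \<in> {c l s t | l s t. l \<in> G \<and> l \<in> Lam \<and> s \<in> T l \<and> t \<in> T l}"
    then obtain l s t where "x = c l s t" "l \<in> G" "l \<in> Lam" "s \<in> T l" "t \<in> T l" by blast
    then show "x \<in> cf ` {j \<in> Ix. fst j \<in> G}"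
      by (intro image_eqI[where x="(l, s, t)"]) auto
  qed
qed (fastforce simp: Ix_def)

lemma img_all: "{c l s t | l s t. l \<in> Lam \<and> s \<in> T l \<and> t \<in> T l} = cf ` Ix"
proof -
  have e: "{j \<in> Ix. fst j \<in> Lam} = Ix" by (auto simp: Ix_def)
  show ?thesis using img_gen[of Lam] unfolding e by simp
qed

lemma ifam_cf: "local.ifam cf Ix"
proof (rule indep_fam_intro[OF finIx])
  show "inj_on cf Ix" using dat2 unfolding cf_def Ix_def .
  show "independent (cf ` Ix)" using dat3 unfolding img_all .
qed

lemma span_cf: "span (cf ` Ix) = UNIV"
  using dat4 unfolding img_all .

definition "coord x = (SOME g. x = (\<Sum>j\<in>Ix. sc (g j) (cf j)))"

lemma coord_eq: "x = (\<Sum>j\<in>Ix. sc (coord x j) (cf j))"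
proof -
  have "x \<in> range (\<lambda>g. \<Sum>j\<in>Ix. sc (g j) (cf j))" using span_cf fam_span[OF finIx, of cf] by simp
  then have "\<exists>g. x = (\<Sum>j\<in>Ix. sc (g j) (cf j))" by blast
  from someI_ex[OF this] show ?thesis unfolding coord_def .
qed

lemma coord_unique: "x = (\<Sum>j\<in>Ix. sc (g j) (cf j)) \<Longrightarrow> j \<in> Ix \<Longrightarrow> coord x j = g j"
  using indep_fam_eq[OF ifam_cf, of "coord x" g j] coord_eq[of x] by simp

lemma coord_add: "j \<in> Ix \<Longrightarrow> coord (x + y) j = coord x j + coord y j"
proof -
  assume j: "j \<in> Ix"
  have "x + y = (\<Sum>j\<in>Ix. sc (coord x j) (cf j)) + (\<Sum>j\<in>Ix. sc (coord y j) (cf j))"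
    using coord_eq[of x] coord_eq[of y] by simp
  also have "\<dots> = (\<Sum>j\<in>Ix. sc (coord x j + coord y j) (cf j))"
    by (simp add: sum.distrib scale_left_distrib)
  finally show ?thesis by (rule coord_unique[OF _ j])
qed

lemma coord_sc: "j \<in> Ix \<Longrightarrow> coord (sc r x) j = r * coord x j"
proof -
  assume j: "j \<in> Ix"
  have "sc r x = sc r (\<Sum>j\<in>Ix. sc (coord x j) (cf j))" using coord_eq[of x] by simp
  also have "\<dots> = (\<Sum>j\<in>Ix. sc (r * coord x j) (cf j))"
    by (simp add: scale_sum_right)
  finally show ?thesis by (rule coord_unique[OF _ j])
qed

lemma coord_zero: "j \<in> Ix \<Longrightarrow> coord 0 j = 0"
  using coord_sc[of j 0 0] by simp

lemma coord_diff: "j \<in> Ix \<Longrightarrow> coord (x - y) j = coord x j - coord y j"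
  using coord_add[of j x "sc (-1) y"] coord_sc[of j "-1" y] by simp

lemma coord_sum:
  assumes "j \<in> Ix" "finite K"
  shows "coord (\<Sum>k\<in>K. f k) j = (\<Sum>k\<in>K. coord (f k) j)"
  using assms(2) by (induct K rule: finite_induct) (simp_all add: coord_zero[OF assms(1)] coord_add[OF assms(1)])

lemma coord_basis: "k \<in> Ix \<Longrightarrow> j \<in> Ix \<Longrightarrow> coord (cf k) j = (if j = k then 1 else 0)"
proof -
  assume k: "k \<in> Ix" and j: "j \<in> Ix"
  have "cf k = (\<Sum>j\<in>Ix. sc (if j = k then 1 else 0) (cf j))"
  proof -
    have "(\<Sum>j\<in>Ix. sc (if j = k then 1 else 0) (cf j)) = (\<Sum>j\<in>Ix. if j = k then cf j else 0)"
      by (rule sum.cong) auto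
    also have "\<dots> = cf k" using k finIx by simp
    finally show ?thesis by simp
  qed
  then show ?thesis by (rule coord_unique[OF _ j])
qed

definition "NN G = span (cf ` {j \<in> Ix. fst j \<in> G})"

lemma NN_sub: "subspace (NN G)"
  unfolding NN_def by simp

lemma NN_mono: "G1 \<subseteq> G2 \<Longrightarrow> NN G1 \<subseteq> NN G2"
  unfolding NN_def by (rule span_mono) blast

lemma cf_in: "j \<in> Ix \<Longrightarrow> fst j \<in> G \<Longrightarrow> cf j \<in> NN G"
  unfolding NN_def by (rule span_base) blast

lemma c_in: "l \<in> G \<Longrightarrow> l \<in> Lam \<Longrightarrow> s \<in> T l \<Longrightarrow> t \<in> T l \<Longrightarrow> c l s t \<in> NN G"
  using cf_in[of "(l, s, t)" G] by simp

lemma NN_char: "x \<in> NN G \<longleftrightarrow> (\<forall>j\<in>Ix. fst j \<notin> G \<longrightarrow> coord x j = 0)"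
proof
  let ?IG = "{j \<in> Ix. fst j \<in> G}"
  have finIG: "finite ?IG" using finIx by simp
  assume "x \<in> NN G"
  then obtain g where g: "x = (\<Sum>j\<in>?IG. sc (g j) (cf j))"
    unfolding NN_def fam_span[OF finIG] by blast
  have "x = (\<Sum>j\<in>Ix. sc (if fst j \<in> G then g j else 0) (cf j))"
  proof -
    have "(\<Sum>j\<in>Ix. sc (if fst j \<in> G then g j else 0) (cf j)) = (\<Sum>j\<in>Ix. if j \<in> ?IG then sc (g j) (cf j) else 0)"
      by (rule sum.cong) auto
    also have "\<dots> = (\<Sum>j\<in>?IG. sc (g j) (cf j))"
      using finIx by (simp add: sum.If_cases Int_def)
    finally show ?thesis using g by simp
  qed
  then show "\<forall>j\<in>Ix. fst j \<notin> G \<longrightarrow> coord x j = 0" using coord_unique by force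
next
  let ?IG = "{j \<in> Ix. fst j \<in> G}"
  assume z: "\<forall>j\<in>Ix. fst j \<notin> G \<longrightarrow> coord x j = 0"
  have "x = (\<Sum>j\<in>Ix. sc (coord x j) (cf j))" by (rule coord_eq)
  also have "\<dots> = (\<Sum>j\<in>Ix. if j \<in> ?IG then sc (coord x j) (cf j) else 0)"
    by (rule sum.cong) (use z in auto)
  also have "\<dots> = (\<Sum>j\<in>?IG. sc (coord x j) (cf j))"
    using finIx by (simp add: sum.If_cases Int_def)
  finally show "x \<in> NN G" unfolding NN_def
    using span_sum[of ?IG "\<lambda>j. sc (coord x j) (cf j)" "cf ` ?IG"] span_scale span_base by auto
qed

lemma NN_induct:
  assumes "x \<in> NN G" "subspace {x. P x}" "\<And>j. j \<in> Ix \<Longrightarrow> fst j \<in> G \<Longrightarrow> P (cf j)"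
  shows "P x"
proof -
  have "NN G \<subseteq> {x. P x}" unfolding NN_def by (rule span_minimal[OF _ assms(2)]) (use assms(3) in auto)
  then show ?thesis using assms(1) by blast
qed

lemma cell_upper_NN: "cell_upper sc Lam Le T c l = NN (gt l)"
proof -
  have "{c m u v | m u v. m \<in> Lam \<and> strictly_above Le m l \<and> u \<in> T m \<and> v \<in> T m} =
        {c m u v | m u v. m \<in> gt l \<and> m \<in> Lam \<and> u \<in> T m \<and> v \<in> T m}"
    unfolding ideal_gt_def by blast
  then show ?thesis unfolding cell_upper_def NN_def img_gen by simp
qed


lemma NN_subspace_mem: "x \<in> NN G \<Longrightarrow> y \<in> NN G \<Longrightarrow> x + y \<in> NN G"
  using subspace_add[OF NN_sub] by blast

lemma left_gen:
  assumes G: "oi G" and j: "j \<in> Ix" "fst j \<in> G"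
  shows "a * cf j \<in> NN G"
proof -
  obtain m u v where juv: "j = (m, u, v)" by (cases j)
  have m: "m \<in> Lam" "u \<in> T m" "v \<in> T m" "m \<in> G" using j juv by auto
  obtain rr where rr: "\<forall>t\<in>T m. a * c m u t - (\<Sum>w\<in>T m. sc (rr w) (c m w t)) \<in> cell_upper sc Lam Le T c m"
    using dat5 m by blast
  have 1: "a * c m u v - (\<Sum>w\<in>T m. sc (rr w) (c m w v)) \<in> NN G"
    using rr m NN_mono[OF gt_sub[OF G m(4)]] cell_upper_NN by blast
  have 2: "(\<Sum>w\<in>T m. sc (rr w) (c m w v)) \<in> NN G"
    by (intro subspace_sum[OF NN_sub] subspace_scale[OF NN_sub] c_in) (use m in auto)
  have "a * c m u v = (a * c m u v - (\<Sum>w\<in>T m. sc (rr w) (c m w v))) + (\<Sum>w\<in>T m. sc (rr w) (c m w v))"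
    by simp
  then have "a * c m u v \<in> NN G" using NN_subspace_mem[OF 1 2] by simp
  then show ?thesis using juv by simp
qed

lemma NN_left: "oi G \<Longrightarrow> x \<in> NN G \<Longrightarrow> a * x \<in> NN G"
proof -
  assume G: "oi G" and x: "x \<in> NN G"
  show ?thesis
  proof (rule NN_induct[OF x, where P = "\<lambda>x. a * x \<in> NN G"])
    show "subspace {x. a * x \<in> NN G}"
      unfolding subspace_def
      by (auto simp: distrib_left sc_mult2[symmetric] intro: subspace_0[OF NN_sub] subspace_add[OF NN_sub] subspace_scale[OF NN_sub])
    show "\<And>j. j \<in> Ix \<Longrightarrow> fst j \<in> G \<Longrightarrow> a * cf j \<in> NN G" by (rule left_gen[OF G])
  qed
qed

lemma i_gen:
  assumes G: "oi G" and j: "j \<in> Ix" "fst j \<in> G"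
  shows "i (cf j) \<in> NN G"
proof -
  obtain m u v where juv: "j = (m, u, v)" by (cases j)
  have m: "m \<in> Lam" "u \<in> T m" "v \<in> T m" "m \<in> G" using j juv by auto
  have 1: "i (c m u v) - c m v u \<in> NN G"
    using dat6 m NN_mono[OF gt_sub[OF G m(4)]] cell_upper_NN by blast
  have 2: "c m v u \<in> NN G" by (rule c_in) (use m in auto)
  have "i (c m u v) = (i (c m u v) - c m v u) + c m v u" by simp
  then have "i (c m u v) \<in> NN G" using NN_subspace_mem[OF 1 2] by simp
  then show ?thesis using juv by simp
qed

lemma NN_i: "oi G \<Longrightarrow> x \<in> NN G \<Longrightarrow> i x \<in> NN G"
proof -
  assume G: "oi G" and x: "x \<in> NN G"
  show ?thesis
  proof (rule NN_induct[OF x, where P = "\<lambda>x. i x \<in> NN G"])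
    show "subspace {x. i x \<in> NN G}"
      unfolding subspace_def
      by (auto simp: i_add i_sc intro: subspace_0[OF NN_sub] subspace_add[OF NN_sub] subspace_scale[OF NN_sub])
    show "\<And>j. j \<in> Ix \<Longrightarrow> fst j \<in> G \<Longrightarrow> i (cf j) \<in> NN G" by (rule i_gen[OF G])
  qed
qed

lemma NN_right: "oi G \<Longrightarrow> x \<in> NN G \<Longrightarrow> x * a \<in> NN G"
proof -
  assume G: "oi G" and x: "x \<in> NN G"
  have "i a * i x \<in> NN G" by (rule NN_left[OF G NN_i[OF G x]])
  then have "i (i a * i x) \<in> NN G" by (rule NN_i[OF G])
  moreover have "i (i a * i x) = x * a" by (simp add: i_mult i_i)
  ultimately show ?thesis by simp
qed

lemma NN_ideal: "oi G \<Longrightarrow> two_sided_ideal (NN G)"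
  unfolding two_sided_ideal_def
  using subspace_0[OF NN_sub] subspace_add[OF NN_sub] NN_left NN_right by blast

lemma NN_empty: "NN {} = {0}"
  unfolding NN_def by simp

lemma NN_span_all: "span (\<Union>m\<in>Lam. NN (ge m)) = UNIV"
proof -
  have "cf ` Ix \<subseteq> (\<Union>m\<in>Lam. NN (ge m))"
  proof
    fix x assume "x \<in> cf ` Ix"
    then obtain j where j: "j \<in> Ix" "x = cf j" by blast
    have "fst j \<in> Lam" using j(1) by (auto simp: Ix_def)
    moreover then have "fst j \<in> ge (fst j)" using le_refl by (simp add: ideal_ge_def)
    ultimately show "x \<in> (\<Union>m\<in>Lam. NN (ge m))" using cf_in[OF j(1)] j(2) by blast
  qed
  then have "span (cf ` Ix) \<subseteq> span (\<Union>m\<in>Lam. NN (ge m))" by (rule span_mono)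
  then show ?thesis using span_cf by blast
qed

lemma NN_gt:
  assumes l: "l \<in> Lam"
  shows "NN (gt l) = span (\<Union>m\<in>gt l. NN (ge m))"
proof
  have gen: "cf ` {j \<in> Ix. fst j \<in> gt l} \<subseteq> span (\<Union>m\<in>gt l. NN (ge m))"
  proof
    fix x assume "x \<in> cf ` {j \<in> Ix. fst j \<in> gt l}"
    then obtain j where j: "j \<in> Ix" "fst j \<in> gt l" "x = cf j" by blast
    have "fst j \<in> Lam" using j(1) by (auto simp: Ix_def)
    then have "fst j \<in> ge (fst j)" using le_refl by (simp add: ideal_ge_def)
    then have "x \<in> NN (ge (fst j))" using cf_in[OF j(1)] j(3) by blast
    then show "x \<in> span (\<Union>m\<in>gt l. NN (ge m))" using j(2) by (intro span_base) blast
  qed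
  show "NN (gt l) \<subseteq> span (\<Union>m\<in>gt l. NN (ge m))"
    unfolding NN_def[of "gt l"] by (rule span_minimal[OF gen subspace_span])
  show "span (\<Union>m\<in>gt l. NN (ge m)) \<subseteq> NN (gt l)"
  proof (rule span_minimal[OF _ NN_sub])
    show "(\<Union>m\<in>gt l. NN (ge m)) \<subseteq> NN (gt l)"
      using NN_mono[OF ge_sub[OF oi_gt]] by blast
  qed
qed


definition "nT l = card (T l)"
definition "en l = (SOME e. bij_betw e {0..<nT l} (T l))"

lemma en_bij: "l \<in> Lam \<Longrightarrow> bij_betw (en l) {0..<nT l} (T l)"
proof -
  assume l: "l \<in> Lam"
  have "\<exists>e. bij_betw e {0..<nT l} (T l)" unfolding nT_def
    by (rule ex_bij_betw_nat_finite) (use dat1 l in blast)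
  then show ?thesis unfolding en_def by (rule someI_ex)
qed

lemma en_in: "l \<in> Lam \<Longrightarrow> p < nT l \<Longrightarrow> en l p \<in> T l"
  using en_bij bij_betwE by fastforce

lemma en_inj: "l \<in> Lam \<Longrightarrow> p < nT l \<Longrightarrow> q < nT l \<Longrightarrow> en l p = en l q \<longleftrightarrow> p = q"
  using en_bij unfolding bij_betw_def inj_on_def by fastforce

lemma en_surj: "l \<in> Lam \<Longrightarrow> s \<in> T l \<Longrightarrow> \<exists>p<nT l. s = en l p"
proof -
  assume l: "l \<in> Lam" and s: "s \<in> T l"
  have "T l = en l ` {0..<nT l}" using en_bij[OF l] unfolding bij_betw_def by simp
  then show ?thesis using s by auto
qed

lemma idx_in: "l \<in> Lam \<Longrightarrow> p < nT l \<Longrightarrow> q < nT l \<Longrightarrow> (l, en l p, en l q) \<in> Ix"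
  using en_in by simp

definition "blk l x = mat (nT l) (nT l) (\<lambda>(p, q). coord x (l, en l p, en l q))"

definition "rr l a s = (SOME rr. \<forall>t\<in>T l. a * c l s t - (\<Sum>v\<in>T l. sc (rr v) (c l v t)) \<in> cell_upper sc Lam Le T c l)"

definition "rho l a = mat (nT l) (nT l) (\<lambda>(v, s). rr l a (en l s) (en l v))"

lemma rr_prop:
  assumes l: "l \<in> Lam" and s: "s \<in> T l" and t: "t \<in> T l"
  shows "a * c l s t - (\<Sum>v\<in>T l. sc (rr l a s v) (c l v t)) \<in> NN (gt l)"
proof -
  have "\<exists>rr. \<forall>t\<in>T l. a * c l s t - (\<Sum>v\<in>T l. sc (rr v) (c l v t)) \<in> cell_upper sc Lam Le T c l"
    using dat5 l s by blast
  then have "\<forall>t\<in>T l. a * c l s t - (\<Sum>v\<in>T l. sc (rr l a s v) (c l v t)) \<in> cell_upper sc Lam Le T c l"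
    unfolding rr_def by (rule someI_ex[where P="\<lambda>rr. \<forall>t\<in>T l. a * c l s t - (\<Sum>v\<in>T l. sc (rr v) (c l v t)) \<in> cell_upper sc Lam Le T c l"])
  then show ?thesis using t unfolding cell_upper_NN by blast
qed

lemma not_gt: "l \<notin> gt l"
  unfolding ideal_gt_def strictly_above_def by simp

lemma coord_gt_zero: "x \<in> NN (gt l) \<Longrightarrow> v \<in> T l \<Longrightarrow> t \<in> T l \<Longrightarrow> l \<in> Lam \<Longrightarrow> coord x (l, v, t) = 0"
  using NN_char not_gt by fastforce

lemma coord_c: "(l, w, t) \<in> Ix \<Longrightarrow> j \<in> Ix \<Longrightarrow> coord (c l w t) j = (if j = (l, w, t) then 1 else 0)"
  using coord_basis[of "(l, w, t)" j] by simp

lemma coord_sum_basis: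
  assumes l: "l \<in> Lam" and v: "v \<in> T l" and t': "t' \<in> T l" and t: "t \<in> T l"
  shows "coord (\<Sum>w\<in>T l. sc (f w) (c l w t)) (l, v, t') = (if t' = t then f v else 0)"
proof -
  have j: "(l, v, t') \<in> Ix" using l v t' by simp
  have fin: "finite (T l)" using dat1 l by blast
  have "coord (\<Sum>w\<in>T l. sc (f w) (c l w t)) (l, v, t') = (\<Sum>w\<in>T l. f w * coord (cf (l, w, t)) (l, v, t'))"
    by (simp add: coord_sum[OF j fin] coord_sc[OF j])
  also have "\<dots> = (\<Sum>w\<in>T l. if w = v then (if t' = t then f v else 0) else 0)"
    by (rule sum.cong[OF refl]) (use l t j in \<open>auto simp: coord_c\<close>)
  also have "\<dots> = (if t' = t then f v else 0)" using fin v by simp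
  finally show ?thesis .
qed

lemma coord_left_gen:
  assumes l: "l \<in> Lam" and s: "s \<in> T l" and t: "t \<in> T l" and v: "v \<in> T l" and t': "t' \<in> T l"
  shows "coord (a * c l s t) (l, v, t') = (if t' = t then rr l a s v else 0)"
proof -
  let ?S = "\<Sum>w\<in>T l. sc (rr l a s w) (c l w t)"
  have j: "(l, v, t') \<in> Ix" using l v t' by simp
  have "a * c l s t = (a * c l s t - ?S) + ?S" by simp
  then have "coord (a * c l s t) (l, v, t') = coord (a * c l s t - ?S) (l, v, t') + coord ?S (l, v, t')"
    using coord_add[OF j] by metis
  also have "coord (a * c l s t - ?S) (l, v, t') = 0"
    by (rule coord_gt_zero[OF rr_prop[OF l s t] v t' l])
  also have "coord ?S (l, v, t') = (if t' = t then rr l a s v else 0)"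
    by (rule coord_sum_basis[OF l v t' t])
  finally show ?thesis by simp
qed

lemma coord_i_gen:
  assumes l: "l \<in> Lam" and s: "s \<in> T l" and t: "t \<in> T l" and v: "v \<in> T l" and t': "t' \<in> T l"
  shows "coord (i (c l s t)) (l, v, t') = (if (v, t') = (t, s) then 1 else 0)"
proof -
  have j: "(l, v, t') \<in> Ix" using l v t' by simp
  have D: "i (c l s t) - c l t s \<in> NN (gt l)" using dat6 l s t cell_upper_NN by blast
  have "i (c l s t) = (i (c l s t) - c l t s) + c l t s" by simp
  then have "coord (i (c l s t)) (l, v, t') = coord (i (c l s t) - c l t s) (l, v, t') + coord (c l t s) (l, v, t')"
    using coord_add[OF j] by metis
  also have "coord (i (c l s t) - c l t s) (l, v, t') = 0"
    by (rule coord_gt_zero[OF D v t' l])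
  also have "coord (c l t s) (l, v, t') = (if (v, t') = (t, s) then 1 else 0)"
    using coord_c[of l t s "(l, v, t')"] j l s t by auto
  finally show ?thesis by simp
qed

lemma coord_notin_zero:
  assumes "x \<in> NN G" "l \<notin> G" "(l, v, t) \<in> Ix"
  shows "coord x (l, v, t) = 0"
  using assms NN_char by fastforce


lemma l_notin_ge:
  assumes lmin: "\<And>m. m \<in> G \<Longrightarrow> (m, l) \<in> Le \<Longrightarrow> m = l" and m: "m \<in> G" "m \<noteq> l"
  shows "l \<notin> ge m"
  using assms unfolding ideal_ge_def by blast

lemma BLe:
  assumes G: "oi G" and lG: "l \<in> G" and lmin: "\<And>m. m \<in> G \<Longrightarrow> (m, l) \<in> Le \<Longrightarrow> m = l" and x: "x \<in> NN G"
  shows "\<forall>p<nT l. \<forall>q<nT l. coord (a * x) (l, en l p, en l q) =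
            (\<Sum>k\<in>{0..<nT l}. rho l a $$ (p, k) * coord x (l, en l k, en l q))"
proof -
  have l: "l \<in> Lam" using oi_sub[OF G] lG by blast
  let ?n = "nT l"
  note idx = idx_in[OF l]
  show ?thesis
  proof (rule NN_induct[OF x, where P = "\<lambda>x. \<forall>p<?n. \<forall>q<?n. coord (a * x) (l, en l p, en l q) =
            (\<Sum>k\<in>{0..<?n}. rho l a $$ (p, k) * coord x (l, en l k, en l q))"])
    show "subspace {x. \<forall>p<?n. \<forall>q<?n. coord (a * x) (l, en l p, en l q) =
            (\<Sum>k\<in>{0..<?n}. rho l a $$ (p, k) * coord x (l, en l k, en l q))}"
    proof (rule subspaceI)
      show "0 \<in> {x. \<forall>p<?n. \<forall>q<?n. coord (a * x) (l, en l p, en l q) =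
            (\<Sum>k\<in>{0..<?n}. rho l a $$ (p, k) * coord x (l, en l k, en l q))}"
        using idx by (simp add: coord_zero)
      fix x y
      assume x: "x \<in> {x. \<forall>p<?n. \<forall>q<?n. coord (a * x) (l, en l p, en l q) =
            (\<Sum>k\<in>{0..<?n}. rho l a $$ (p, k) * coord x (l, en l k, en l q))}"
      then show "sc r x \<in> {x. \<forall>p<?n. \<forall>q<?n. coord (a * x) (l, en l p, en l q) =
            (\<Sum>k\<in>{0..<?n}. rho l a $$ (p, k) * coord x (l, en l k, en l q))}" for r
        using idx by (simp add: sc_mult2[symmetric] coord_sc sum_distrib_left mult.left_commute)
      assume y: "y \<in> {x. \<forall>p<?n. \<forall>q<?n. coord (a * x) (l, en l p, en l q) =
            (\<Sum>k\<in>{0..<?n}. rho l a $$ (p, k) * coord x (l, en l k, en l q))}"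
      show "x + y \<in> {x. \<forall>p<?n. \<forall>q<?n. coord (a * x) (l, en l p, en l q) =
            (\<Sum>k\<in>{0..<?n}. rho l a $$ (p, k) * coord x (l, en l k, en l q))}"
        using x y idx by (simp add: distrib_left coord_add sum.distrib)
    qed
  next
    fix j assume j: "j \<in> Ix" "fst j \<in> G"
    obtain m u w where juw: "j = (m, u, w)" by (cases j)
    have m: "m \<in> Lam" "u \<in> T m" "w \<in> T m" "m \<in> G" using j juw by auto
    show "\<forall>p<?n. \<forall>q<?n. coord (a * cf j) (l, en l p, en l q) =
            (\<Sum>k\<in>{0..<?n}. rho l a $$ (p, k) * coord (cf j) (l, en l k, en l q))"
    proof (intro allI impI)
      fix p q assume p: "p < ?n" and q: "q < ?n"
      show "coord (a * cf j) (l, en l p, en l q) =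
            (\<Sum>k\<in>{0..<?n}. rho l a $$ (p, k) * coord (cf j) (l, en l k, en l q))"
      proof (cases "m = l")
        case True
        obtain s where s: "s < ?n" "u = en l s" using en_surj[OF l] m True by blast
        obtain t where t: "t < ?n" "w = en l t" using en_surj[OF l] m True by blast
        have "coord (a * cf j) (l, en l p, en l q) = (if en l q = w then rr l a u (en l p) else 0)"
          using coord_left_gen[OF l, of u w "en l p" "en l q" a] m True juw en_in[OF l] p q by simp
        also have "\<dots> = (if q = t then rho l a $$ (p, s) else 0)"
          using s t p q en_inj[OF l] by (auto simp: rho_def)
        also have "\<dots> = (\<Sum>k\<in>{0..<?n}. if k = s then (if q = t then rho l a $$ (p, s) else 0) else 0)"
          using s by simp
        also have "\<dots> = (\<Sum>k\<in>{0..<?n}. rho l a $$ (p, k) * coord (cf j) (l, en l k, en l q))"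
        proof (rule sum.cong[OF refl])
          fix k assume k: "k \<in> {0..<?n}"
          have "coord (cf j) (l, en l k, en l q) = (if k = s \<and> q = t then 1 else 0)"
            using coord_c[of l u w "(l, en l k, en l q)"] idx[of k q] k q s t m True juw en_inj[OF l]
            by auto
          then show "(if k = s then (if q = t then rho l a $$ (p, s) else 0) else 0) =
                rho l a $$ (p, k) * coord (cf j) (l, en l k, en l q)" by auto
        qed
        finally show ?thesis .
      next
        case False
        have "c m u w \<in> NN (ge m)" by (rule c_in) (use m le_refl in \<open>auto simp: ideal_ge_def\<close>)
        then have "a * cf j \<in> NN (ge m)" using NN_left[OF oi_ge] juw by simp
        then have 1: "coord (a * cf j) (l, en l p, en l q) = 0"
          by (rule coord_notin_zero[OF _ l_notin_ge[OF lmin m(4) False] idx[OF p q]])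
        have "coord (cf j) (l, en l k, en l q) = 0" if "k < ?n" for k
          using coord_c[of m u w "(l, en l k, en l q)"] idx[OF that q] m juw False by auto
        then show ?thesis using 1 by simp
      qed
    qed
  qed
qed

lemma BIe:
  assumes G: "oi G" and lG: "l \<in> G" and lmin: "\<And>m. m \<in> G \<Longrightarrow> (m, l) \<in> Le \<Longrightarrow> m = l" and x: "x \<in> NN G"
  shows "\<forall>p<nT l. \<forall>q<nT l. coord (i x) (l, en l p, en l q) = coord x (l, en l q, en l p)"
proof -
  have l: "l \<in> Lam" using oi_sub[OF G] lG by blast
  let ?n = "nT l"
  note idx = idx_in[OF l]
  show ?thesis
  proof (rule NN_induct[OF x, where P = "\<lambda>x. \<forall>p<?n. \<forall>q<?n. coord (i x) (l, en l p, en l q) = coord x (l, en l q, en l p)"])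
    show "subspace {x. \<forall>p<?n. \<forall>q<?n. coord (i x) (l, en l p, en l q) = coord x (l, en l q, en l p)}"
      by (rule subspaceI) (use idx in \<open>auto simp: coord_zero coord_add coord_sc i_add i_sc\<close>)
  next
    fix j assume j: "j \<in> Ix" "fst j \<in> G"
    obtain m u w where juw: "j = (m, u, w)" by (cases j)
    have m: "m \<in> Lam" "u \<in> T m" "w \<in> T m" "m \<in> G" using j juw by auto
    show "\<forall>p<?n. \<forall>q<?n. coord (i (cf j)) (l, en l p, en l q) = coord (cf j) (l, en l q, en l p)"
    proof (intro allI impI)
      fix p q assume p: "p < ?n" and q: "q < ?n"
      show "coord (i (cf j)) (l, en l p, en l q) = coord (cf j) (l, en l q, en l p)"
      proof (cases "m = l")
        case True
        have "coord (i (cf j)) (l, en l p, en l q) = (if (en l p, en l q) = (w, u) then 1 else 0)"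
          using coord_i_gen[OF l, of u w "en l p" "en l q"] m True juw en_in[OF l] p q by simp
        also have "\<dots> = coord (cf j) (l, en l q, en l p)"
          using coord_c[of l u w "(l, en l q, en l p)"] idx[OF q p] m True juw by auto
        finally show ?thesis .
      next
        case False
        have "c m u w \<in> NN (ge m)" by (rule c_in) (use m le_refl in \<open>auto simp: ideal_ge_def\<close>)
        then have "i (cf j) \<in> NN (ge m)" using NN_i[OF oi_ge] juw by simp
        then have 1: "coord (i (cf j)) (l, en l p, en l q) = 0"
          by (rule coord_notin_zero[OF _ l_notin_ge[OF lmin m(4) False] idx[OF p q]])
        have "coord (cf j) (l, en l q, en l p) = 0"
          using coord_c[of m u w "(l, en l q, en l p)"] idx[OF q p] m juw False by auto
        then show ?thesis using 1 by simp
      qed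
    qed
  qed
qed


lemma blk_carrier: "blk l x \<in> carrier_mat (nT l) (nT l)"
  by (simp add: blk_def)

lemma rho_carrier: "rho l a \<in> carrier_mat (nT l) (nT l)"
  by (simp add: rho_def)

lemma dims_blk_rho[simp]: "dim_row (blk l x) = nT l" "dim_col (blk l x) = nT l"
  "dim_row (rho l a) = nT l" "dim_col (rho l a) = nT l"
  by (simp_all add: blk_def rho_def)

lemma blk_index: "p < nT l \<Longrightarrow> q < nT l \<Longrightarrow> blk l x $$ (p, q) = coord x (l, en l p, en l q)"
  by (simp add: blk_def)

lemma BL:
  assumes G: "oi G" and lG: "l \<in> G" and lmin: "\<And>m. m \<in> G \<Longrightarrow> (m, l) \<in> Le \<Longrightarrow> m = l" and x: "x \<in> NN G"
  shows "blk l (a * x) = rho l a * blk l x"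
proof (rule eq_matI)
  note E = BLe[OF G lG lmin x, of a]
  fix p q assume "p < dim_row (rho l a * blk l x)" "q < dim_col (rho l a * blk l x)"
  then have pq: "p < nT l" "q < nT l" using rho_carrier blk_carrier by auto
  have "(rho l a * blk l x) $$ (p, q) = (\<Sum>k\<in>{0..<nT l}. rho l a $$ (p, k) * blk l x $$ (k, q))"
    using pq rho_carrier[of l a] blk_carrier[of l x] by (simp add: scalar_prod_def)
  also have "\<dots> = (\<Sum>k\<in>{0..<nT l}. rho l a $$ (p, k) * coord x (l, en l k, en l q))"
    using pq by (simp add: blk_index)
  finally show "blk l (a * x) $$ (p, q) = (rho l a * blk l x) $$ (p, q)"
    using E pq by (simp add: blk_index)
qed (use rho_carrier blk_carrier in auto)

lemma BI:
  assumes G: "oi G" and lG: "l \<in> G" and lmin: "\<And>m. m \<in> G \<Longrightarrow> (m, l) \<in> Le \<Longrightarrow> m = l" and x: "x \<in> NN G"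
  shows "blk l (i x) = transpose_mat (blk l x)"
  using BIe[OF G lG lmin x] by (intro eq_matI) (auto simp: blk_def)

lemma ge_min: "m \<in> ge l \<Longrightarrow> (m, l) \<in> Le \<Longrightarrow> m = l"
  unfolding ideal_ge_def using le_antisym by blast

lemma l_in_ge: "l \<in> Lam \<Longrightarrow> l \<in> ge l"
  unfolding ideal_ge_def using le_refl by blast

lemma rho_coord:
  assumes l: "l \<in> Lam" and p: "p < nT l" and s: "s < nT l"
  shows "rho l a $$ (p, s) = coord (a * c l (en l s) (en l s)) (l, en l p, en l s)"
  using coord_left_gen[OF l en_in[OF l s] en_in[OF l s] en_in[OF l p] en_in[OF l s], of a] p s
  by (simp add: rho_def)

lemma rep: "l \<in> Lam \<Longrightarrow> left_module_rep sc (nT l) (rho l)"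
proof -
  assume l: "l \<in> Lam"
  note idx = idx_in[OF l]
  have cin: "c l (en l s) (en l s) \<in> NN (ge l)" if "s < nT l" for s
    by (rule c_in) (use l that en_in[OF l] l_in_ge in auto)
  show ?thesis
    unfolding left_module_rep_def
  proof (intro conjI allI)
    show "rho l a \<in> carrier_mat (nT l) (nT l)" for a by (rule rho_carrier)
    show "rho l (a + b) = rho l a + rho l b" for a b
      by (rule eq_matI) (auto simp: rho_coord[OF l] distrib_right coord_add en_in[OF l] l rho_carrier)
    show "rho l (sc r a) = r \<cdot>\<^sub>m rho l a" for r a
      by (rule eq_matI) (auto simp: rho_coord[OF l] sc_mult1[symmetric] coord_sc en_in[OF l] l rho_carrier)
    show "rho l (a * b) = rho l a * rho l b" for a b
    proof (rule eq_matI)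
      fix p s assume "p < dim_row (rho l a * rho l b)" "s < dim_col (rho l a * rho l b)"
      then have ps: "p < nT l" "s < nT l" using rho_carrier by auto
      have x: "b * c l (en l s) (en l s) \<in> NN (ge l)" by (rule NN_left[OF oi_ge cin[OF ps(2)]])
      have "rho l (a * b) $$ (p, s) = coord (a * (b * c l (en l s) (en l s))) (l, en l p, en l s)"
        using ps by (simp add: rho_coord[OF l] mult.assoc)
      also have "\<dots> = (\<Sum>k\<in>{0..<nT l}. rho l a $$ (p, k) * coord (b * c l (en l s) (en l s)) (l, en l k, en l s))"
        using BLe[OF oi_ge l_in_ge[OF l] ge_min x, of a] ps by blast
      also have "\<dots> = (\<Sum>k\<in>{0..<nT l}. rho l a $$ (p, k) * rho l b $$ (k, s))"
        by (rule sum.cong[OF refl]) (use ps in \<open>simp add: rho_coord[OF l]\<close>)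
      also have "\<dots> = (rho l a * rho l b) $$ (p, s)"
        using ps rho_carrier[of l a] rho_carrier[of l b] by (simp add: scalar_prod_def)
      finally show "rho l (a * b) $$ (p, s) = (rho l a * rho l b) $$ (p, s)" .
    qed (use rho_carrier in auto)
    show "rho l 1 = 1\<^sub>m (nT l)"
    proof (rule eq_matI)
      fix p s assume "p < dim_row (1\<^sub>m (nT l))" "s < dim_col (1\<^sub>m (nT l))"
      then have ps: "p < nT l" "s < nT l" by auto
      have "rho l 1 $$ (p, s) = coord (c l (en l s) (en l s)) (l, en l p, en l s)"
        using ps by (simp add: rho_coord[OF l])
      also have "\<dots> = (if p = s then 1 else 0)"
        using coord_c[of l "en l s" "en l s" "(l, en l p, en l s)"] idx ps en_inj[OF l] by auto
      finally show "rho l 1 $$ (p, s) = 1\<^sub>m (nT l) $$ (p, s)" using ps by simp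
    qed (use rho_carrier in auto)
  qed
qed


lemma blk_add: "l \<in> Lam \<Longrightarrow> blk l (x + y) = blk l x + blk l y"
  by (rule eq_matI) (auto simp: blk_def coord_add en_in)

lemma blk_sc: "l \<in> Lam \<Longrightarrow> blk l (sc r x) = r \<cdot>\<^sub>m blk l x"
  by (rule eq_matI) (auto simp: blk_def coord_sc en_in)

lemma iso:
  assumes G: "oi G" and G': "oi G'" and sub: "G \<subseteq> G'" and diff: "G' - G = {l}"
  shows "cell_iso sc i (nT l) (rho l) (NN G) (NN G') (blk l)"
proof -
  have lG': "l \<in> G'" and lG: "l \<notin> G" using diff by auto
  have l: "l \<in> Lam" using oi_sub[OF G'] lG' by blast
  have lmin: "m = l" if "m \<in> G'" "(m, l) \<in> Le" for m
  proof (rule ccontr)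
    assume "m \<noteq> l"
    then have "m \<in> G" using that diff by blast
    then have "l \<in> G" using oi_up[OF G] that by blast
    then show False using lG by simp
  qed
  let ?n = "nT l"
  have img: "blk l ` NN G' = carrier_mat ?n ?n"
  proof
    show "blk l ` NN G' \<subseteq> carrier_mat ?n ?n" using blk_carrier by blast
    show "carrier_mat ?n ?n \<subseteq> blk l ` NN G'"
    proof
      fix M :: "'r mat" assume M: "M \<in> carrier_mat ?n ?n"
      let ?K = "{0..<?n} \<times> {0..<?n}"
      let ?x = "\<Sum>k\<in>?K. sc (M $$ k) (c l (en l (fst k)) (en l (snd k)))"
      have xin: "?x \<in> NN G'"
        by (intro subspace_sum[OF NN_sub] subspace_scale[OF NN_sub] c_in) (use lG' l en_in[OF l] in auto)
      have "blk l ?x = M"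
      proof (rule eq_matI)
        fix p q assume "p < dim_row M" "q < dim_col M"
        then have pq: "p < ?n" "q < ?n" using M by auto
        have j: "(l, en l p, en l q) \<in> Ix" using idx_in[OF l pq] .
        have "blk l ?x $$ (p, q) = (\<Sum>k\<in>?K. M $$ k * coord (c l (en l (fst k)) (en l (snd k))) (l, en l p, en l q))"
          using pq by (simp add: blk_index coord_sum[OF j] coord_sc[OF j])
        also have "\<dots> = (\<Sum>k\<in>?K. if k = (p, q) then M $$ k else 0)"
        proof (rule sum.cong[OF refl])
          fix k assume k: "k \<in> ?K"
          have "(l, en l (fst k), en l (snd k)) \<in> Ix" using k idx_in[OF l] by auto
          then show "M $$ k * coord (c l (en l (fst k)) (en l (snd k))) (l, en l p, en l q) = (if k = (p, q) then M $$ k else 0)"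
            using coord_c[of l "en l (fst k)" "en l (snd k)" "(l, en l p, en l q)"] j k pq en_inj[OF l]
            by (cases k) auto
        qed
        also have "\<dots> = M $$ (p, q)" using pq by simp
        finally show "blk l ?x $$ (p, q) = M $$ (p, q)" .
      qed (use M in auto)
      then show "M \<in> blk l ` NN G'" using xin by (intro image_eqI[where x="?x"]) auto
    qed
  qed
  have ker: "blk l x = 0\<^sub>m ?n ?n \<longleftrightarrow> x \<in> NN G" if x: "x \<in> NN G'" for x
  proof
    assume "x \<in> NN G"
    then show "blk l x = 0\<^sub>m ?n ?n"
      by (intro eq_matI) (auto simp: blk_def intro!: coord_notin_zero[OF _ lG] idx_in[OF l])
  next
    assume z: "blk l x = 0\<^sub>m ?n ?n"
    show "x \<in> NN G"
      unfolding NN_char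
    proof (intro ballI impI)
      fix j assume j: "j \<in> Ix" and jG: "fst j \<notin> G"
      obtain m u w where juw: "j = (m, u, w)" by (cases j)
      show "coord x j = 0"
      proof (cases "m = l")
        case True
        obtain p where p: "p < ?n" "u = en l p" using en_surj[OF l] j juw True by auto
        obtain q where q: "q < ?n" "w = en l q" using en_surj[OF l] j juw True by auto
        have "blk l x $$ (p, q) = 0" using z p q by simp
        then show ?thesis using p q juw True by (simp add: blk_index)
      next
        case False
        then have "m \<notin> G'" using jG juw diff by auto
        then show ?thesis using x j juw NN_char by auto
      qed
    qed
  qed
  show ?thesis
    unfolding cell_iso_def
  proof (intro conjI ballI allI)
    show "blk l ` NN G' = carrier_mat ?n ?n" by (rule img)
    show "blk l (x + y) = blk l x + blk l y" for x y by (rule blk_add[OF l])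
    show "blk l (sc r x) = r \<cdot>\<^sub>m blk l x" for r x by (rule blk_sc[OF l])
    show "(blk l x = 0\<^sub>m ?n ?n) = (x \<in> NN G)" if "x \<in> NN G'" for x by (rule ker[OF that])
    show "blk l (a * x) = rho l a * blk l x" if "x \<in> NN G'" for a x
      by (rule BL[OF G' lG' lmin that])
    show "blk l (i x) = transpose_mat (blk l x)" if "x \<in> NN G'" for x
      by (rule BI[OF G' lG' lmin that])
    show "blk l (x * a) = blk l x * transpose_mat (rho l (i a))" if x: "x \<in> NN G'" for a x
    proof -
      have ix: "i x \<in> NN G'" by (rule NN_i[OF G' x])
      have y: "i a * i x \<in> NN G'" by (rule NN_left[OF G' ix])
      have "blk l (x * a) = blk l (i (i a * i x))" by (simp add: i_mult i_i)
      also have "\<dots> = transpose_mat (blk l (i a * i x))" by (rule BI[OF G' lG' lmin y])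
      also have "\<dots> = transpose_mat (rho l (i a) * blk l (i x))" by (simp add: BL[OF G' lG' lmin ix])
      also have "\<dots> = transpose_mat (rho l (i a) * transpose_mat (blk l x))" by (simp add: BI[OF G' lG' lmin x])
      also have "\<dots> = blk l x * transpose_mat (rho l (i a))"
        by (subst transpose_mult[of _ ?n ?n _ ?n]) (auto simp: blk_carrier rho_carrier)
      finally show ?thesis .
    qed
  qed
qed

lemma datum_net: "is_cell_net sc i Lam Le NN"
  unfolding is_cell_net_def
proof (intro conjI allI impI ballI)
  show "two_sided_ideal (NN G)" if "oi G" for G by (rule NN_ideal[OF that])
  show "i ` NN G \<subseteq> NN G" if "oi G" for G using NN_i[OF that] by blast
  show "NN {} = {0}" by (rule NN_empty)
  show "NN G1 \<subseteq> NN G2" if "G1 \<subseteq> G2" for G1 G2 by (rule NN_mono[OF that])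
  show "span (\<Union>m\<in>Lam. NN (ge m)) = UNIV" by (rule NN_span_all)
  show "NN (gt l) = span (\<Union>m\<in>gt l. NN (ge m))" if "l \<in> Lam" for l by (rule NN_gt[OF that])
  show "\<exists>n rho. left_module_rep sc n rho \<and>
        (\<forall>G G'. oi G \<longrightarrow> oi G' \<longrightarrow> G \<subseteq> G' \<longrightarrow> G' - G = {l} \<longrightarrow>
           (\<exists>alpha. cell_iso sc i n rho (NN G) (NN G') alpha))" if l: "l \<in> Lam" for l
    using rep[OF l] iso by blast
qed

end


theorem mainTheorem2:
  fixes sc :: "'r::idom \<Rightarrow> 'a::ring_1 \<Rightarrow> 'a"
    and i :: "'a \<Rightarrow> 'a"
    and Lam :: "'l set"
    and Le :: "('l \<times> 'l) set"
  assumes "R_algebra sc"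
    and "involution sc i"
    and "finite Lam"
    and "partial_order_on Lam Le"
  shows "has_cell_datum sc i Lam Le \<longleftrightarrow> has_cell_net sc i Lam Le"
proof -
  have C: "calg sc i"
    using assms(1,2) unfolding R_algebra_def involution_def calg_def calg_axioms_def by blast
  show ?thesis
  proof
    assume "has_cell_datum sc i Lam Le"
    then obtain T c where d: "is_cell_datum sc i Lam Le T c" unfolding has_cell_datum_def by blast
    interpret D: datL sc i Lam Le T c
      unfolding datL_def datL_axioms_def using C d assms(3,4) by blast
    show "has_cell_net sc i Lam Le" unfolding has_cell_net_def using D.datum_net by blast
  next
    assume "has_cell_net sc i Lam Le"
    then obtain N where n: "is_cell_net sc i Lam Le N" unfolding has_cell_net_def by blast
    interpret NL: netL sc i Lam Le N
      unfolding netL_def netL_axioms_def using C n assms(3,4) by blast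
    show "has_cell_datum sc i Lam Le" unfolding has_cell_datum_def using NL.net_datum by blast
  qed
qed


end
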